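(* Let $\mathcal{X}=\{x_k\}_{k=1}^\infty$ be a family of vectors in a real or complex Hilbert space $\mathbb{H}$. The following are equivalent: (1) whenever $T,S$ are Hilbert–Schmidt, positive and self-adjoint operators on $\mathbb{H}$ with $\langle Tx_k,x_k\rangle=\langle Sx_k,x_k\rangle$ for all $k$, then $T=S$; (2) whenever $T,S$ are Hilbert–Schmidt self-adjoint operators on $\mathbb{H}$ with $\langle Tx_k,x_k\rangle=\langle Sx_k,x_k\rangle$ for all $k$, then $T=S$; (3) $\mathcal{X}$ is injective.
   Context: A family $\{x_k\}$ in a Hilbert space is called injective if whenever a Hilbert–Schmidt self-adjoint operator $T$ satisfies $\langle Tx_k,x_k\rangle=0$ for all $k$, then $T=0$. *)

theory Defs
  imports "HOL-Analysis.Analysis"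
begin

definition r_orthonormal_basis :: "'a::real_inner set \<Rightarrow> bool" where
  "r_orthonormal_basis B \<longleftrightarrow>
     (\<forall>b\<in>B. norm b = 1) \<and> (\<forall>b\<in>B. \<forall>c\<in>B. b \<noteq> c \<longrightarrow> b \<bullet> c = 0)
     \<and> closure (span B) = UNIV"

definition r_hilbert_schmidt :: "('a::real_inner \<Rightarrow> 'a) \<Rightarrow> bool" where
  "r_hilbert_schmidt T \<longleftrightarrow> bounded_linear T \<and>
     (\<exists>B. r_orthonormal_basis B \<and> (\<lambda>b. (norm (T b))^2) summable_on B)"

definition r_selfadjoint :: "('a::real_inner \<Rightarrow> 'a) \<Rightarrow> bool" where
  "r_selfadjoint T \<longleftrightarrow> bounded_linear T \<and> (\<forall>x y. T x \<bullet> y = x \<bullet> T y)"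

definition r_positive :: "('a::real_inner \<Rightarrow> 'a) \<Rightarrow> bool" where
  "r_positive T \<longleftrightarrow> (\<forall>x. 0 \<le> T x \<bullet> x)"

definition r_injective_family :: "(nat \<Rightarrow> 'a::real_inner) \<Rightarrow> bool" where
  "r_injective_family x \<longleftrightarrow>
     (\<forall>T. r_hilbert_schmidt T \<and> r_selfadjoint T \<and> (\<forall>k. T (x k) \<bullet> x k = 0)
          \<longrightarrow> T = (\<lambda>_. 0))"

section \<open>Complex Hilbert spaces: a Banach space 'a with complex scalar multiplication sc
  extending the real one and an inner product ip (linear in the first argument)
  inducing the norm\<close>

definition complex_hilbert :: "(complex \<Rightarrow> 'a::banach \<Rightarrow> 'a) \<Rightarrow> ('a \<Rightarrow> 'a \<Rightarrow> complex) \<Rightarrow> bool" where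
  "complex_hilbert sc ip \<longleftrightarrow>
     (\<forall>r x. sc (complex_of_real r) x = r *\<^sub>R x) \<and>
     (\<forall>a b x. sc (a * b) x = sc a (sc b x)) \<and>
     (\<forall>a x y. sc a (x + y) = sc a x + sc a y) \<and>
     (\<forall>a b x. sc (a + b) x = sc a x + sc b x) \<and>
     (\<forall>x y z. ip (x + y) z = ip x z + ip y z) \<and>
     (\<forall>a x y. ip (sc a x) y = a * ip x y) \<and>
     (\<forall>x y. ip y x = cnj (ip x y)) \<and>
     (\<forall>x. ip x x = complex_of_real ((norm x)^2))"

definition c_linear :: "(complex \<Rightarrow> 'a::real_normed_vector \<Rightarrow> 'a) \<Rightarrow> ('a \<Rightarrow> 'a) \<Rightarrow> bool" where
  "c_linear sc T \<longleftrightarrow> bounded_linear T \<and> (\<forall>a x. T (sc a x) = sc a (T x))"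

definition cspan :: "(complex \<Rightarrow> 'a::real_vector \<Rightarrow> 'a) \<Rightarrow> 'a set \<Rightarrow> 'a set" where
  "cspan sc B = {y. \<exists>F c. finite F \<and> F \<subseteq> B \<and> y = (\<Sum>b\<in>F. sc (c b) b)}"

definition c_orthonormal_basis ::
  "(complex \<Rightarrow> 'a::real_normed_vector \<Rightarrow> 'a) \<Rightarrow> ('a \<Rightarrow> 'a \<Rightarrow> complex) \<Rightarrow> 'a set \<Rightarrow> bool" where
  "c_orthonormal_basis sc ip B \<longleftrightarrow>
     (\<forall>b\<in>B. ip b b = 1) \<and> (\<forall>b\<in>B. \<forall>c\<in>B. b \<noteq> c \<longrightarrow> ip b c = 0)
     \<and> closure (cspan sc B) = UNIV"

definition c_hilbert_schmidt ::
  "(complex \<Rightarrow> 'a::real_normed_vector \<Rightarrow> 'a) \<Rightarrow> ('a \<Rightarrow> 'a \<Rightarrow> complex) \<Rightarrow> ('a \<Rightarrow> 'a) \<Rightarrow> bool" where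
  "c_hilbert_schmidt sc ip T \<longleftrightarrow> c_linear sc T \<and>
     (\<exists>B. c_orthonormal_basis sc ip B \<and> (\<lambda>b. (norm (T b))^2) summable_on B)"

definition c_selfadjoint ::
  "(complex \<Rightarrow> 'a::real_normed_vector \<Rightarrow> 'a) \<Rightarrow> ('a \<Rightarrow> 'a \<Rightarrow> complex) \<Rightarrow> ('a \<Rightarrow> 'a) \<Rightarrow> bool" where
  "c_selfadjoint sc ip T \<longleftrightarrow> c_linear sc T \<and> (\<forall>x y. ip (T x) y = ip x (T y))"

definition c_positive :: "('a \<Rightarrow> 'a \<Rightarrow> complex) \<Rightarrow> ('a \<Rightarrow> 'a) \<Rightarrow> bool" where
  "c_positive ip T \<longleftrightarrow> (\<forall>x. \<exists>r\<ge>0. ip (T x) x = complex_of_real r)"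

definition c_injective_family ::
  "(complex \<Rightarrow> 'a::real_normed_vector \<Rightarrow> 'a) \<Rightarrow> ('a \<Rightarrow> 'a \<Rightarrow> complex) \<Rightarrow> (nat \<Rightarrow> 'a) \<Rightarrow> bool" where
  "c_injective_family sc ip x \<longleftrightarrow>
     (\<forall>T. c_hilbert_schmidt sc ip T \<and> c_selfadjoint sc ip T \<and> (\<forall>k. ip (T (x k)) (x k) = 0)
          \<longrightarrow> T = (\<lambda>_. 0))"

end

theory Submission
  imports Defs
begin


locale hil =
  fixes inn :: "'v::real_normed_vector \<Rightarrow> 'v \<Rightarrow> real"
  assumes inn_add: "inn (x + y) z = inn x z + inn y z"
    and inn_scale: "inn (r *\<^sub>R x) y = r * inn x y"
    and inn_sym: "inn x y = inn y x"
    and inn_self: "inn x x = (norm x)^2"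
    and inn_complete: "Cauchy (X :: nat \<Rightarrow> 'v) \<Longrightarrow> convergent X"
begin

lemma inn_add2: "inn x (y + z) = inn x y + inn x z"
  by (simp only: inn_sym[of x] inn_add)
lemma inn_scale2: "inn x (r *\<^sub>R y) = r * inn x y"
  by (simp only: inn_sym[of x] inn_scale)
lemma inn_zero[simp]: "inn 0 y = 0" "inn y 0 = 0"
  using inn_scale[of 0 y y] inn_scale2[of y 0 y] by auto
lemma inn_minus: "inn (- x) y = - inn x y" "inn y (- x) = - inn y x"
  using inn_scale[of "-1" x y] inn_scale2[of y "-1" x] by auto
lemma inn_diff: "inn (x - y) z = inn x z - inn y z" "inn z (x - y) = inn z x - inn z y"
  using inn_add[of x "-y" z] inn_add2[of z x "-y"] inn_minus by simp_all
lemma inn_sum: "inn (sum f A) y = (\<Sum>i\<in>A. inn (f i) y)"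
  by (induction A rule: infinite_finite_induct) (auto simp: inn_add)
lemma inn_sum2: "inn y (sum f A) = (\<Sum>i\<in>A. inn y (f i))"
  by (induction A rule: infinite_finite_induct) (auto simp: inn_add2)
lemmas inn_simps = inn_add inn_add2 inn_scale inn_scale2 inn_diff inn_minus

definition sa :: "('v \<Rightarrow> 'v) \<Rightarrow> bool" where
  "sa T \<longleftrightarrow> bounded_linear T \<and> (\<forall>x y. inn (T x) y = inn x (T y))"
definition pos :: "('v \<Rightarrow> 'v) \<Rightarrow> bool" where
  "pos T \<longleftrightarrow> (\<forall>x. 0 \<le> inn (T x) x)"

lemma gcs:
  assumes lin: "linear T" and s: "\<And>x y. inn (T x) y = inn x (T y)"
    and p: "\<And>x. 0 \<le> inn (T x) x"
  shows "(inn (T a) b)^2 \<le> inn (T a) a * inn (T b) b"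
proof -
  define \<alpha> where "\<alpha> = inn (T a) a"
  define \<beta> where "\<beta> = inn (T a) b"
  define \<gamma> where "\<gamma> = inn (T b) b"
  have q: "0 \<le> \<alpha> + 2*t*\<beta> + t^2*\<gamma>" for t
  proof -
    have "T (a + t *\<^sub>R b) = T a + t *\<^sub>R T b"
      using lin by (simp add: linear_add linear_scale)
    moreover have "inn (T b) a = \<beta>" unfolding \<beta>_def using s inn_sym by metis
    ultimately have "inn (T (a + t *\<^sub>R b)) (a + t *\<^sub>R b) = \<alpha> + 2*t*\<beta> + t^2*\<gamma>"
      unfolding \<alpha>_def \<beta>_def \<gamma>_def by (simp add: inn_simps algebra_simps power2_eq_square)
    then show ?thesis using p by metis
  qed
  have g0: "\<gamma> \<ge> 0" unfolding \<gamma>_def using p by simp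
  show ?thesis
  proof (cases "\<gamma> = 0")
    case True
    have "\<beta> = 0"
    proof (rule ccontr)
      assume "\<beta> \<noteq> 0"
      have "0 \<le> \<alpha> + 2*(-(\<alpha>+1)/(2*\<beta>))*\<beta> + (-(\<alpha>+1)/(2*\<beta>))^2*\<gamma>" by (rule q)
      also have "\<dots> = -1" using \<open>\<beta> \<noteq> 0\<close> True by (simp add: field_simps)
      finally show False by simp
    qed
    then show ?thesis using True unfolding \<beta>_def \<gamma>_def by simp
  next
    case False
    then have gp: "\<gamma> > 0" using g0 by simp
    have "0 \<le> \<alpha> + 2*(-\<beta>/\<gamma>)*\<beta> + (-\<beta>/\<gamma>)^2*\<gamma>" by (rule q)
    also have "\<dots> = (\<alpha>*\<gamma> - \<beta>^2)/\<gamma>" using gp by (simp add: field_simps power2_eq_square)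
    finally have "0 \<le> \<alpha>*\<gamma> - \<beta>^2" using gp by (simp add: zero_le_divide_iff)
    then show ?thesis unfolding \<alpha>_def \<beta>_def \<gamma>_def by simp
  qed
qed

lemma cs: "\<bar>inn a b\<bar> \<le> norm a * norm b"
proof -
  have "(inn a b)^2 \<le> inn a a * inn b b"
    using gcs[of "\<lambda>x. x" a b] by (simp add: inn_self linear_id[unfolded id_def])
  also have "\<dots> = (norm a * norm b)^2" by (simp add: inn_self power_mult_distrib)
  finally have "\<bar>inn a b\<bar> \<le> \<bar>norm a * norm b\<bar>" using abs_le_square_iff by blast
  then show ?thesis by simp
qed

lemma bb: "bounded_bilinear inn"
proof
  show "inn (a + a') b = inn a b + inn a' b" for a a' b by (rule inn_add)
  show "inn a (b + b') = inn a b + inn a b'" for a b b' by (rule inn_add2)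
  show "inn (r *\<^sub>R a) b = r *\<^sub>R inn a b" for r a b by (simp add: inn_scale)
  show "inn a (r *\<^sub>R b) = r *\<^sub>R inn a b" for r a b by (simp add: inn_scale2)
  show "\<exists>K. \<forall>a b. norm (inn a b) \<le> norm a * norm b * K"
    by (rule exI[of _ 1]) (simp add: cs)
qed

lemmas inn_tendsto = bounded_bilinear.tendsto[OF bb]
lemmas inn_continuous = bounded_bilinear.continuous[OF bb]

lemma inn_eq_norm: "inn x x = norm x * norm x" by (simp add: inn_self power2_eq_square)

end


context hil begin

definition orthon :: "'v set \<Rightarrow> bool" where
  "orthon B \<longleftrightarrow> (\<forall>b\<in>B. inn b b = 1) \<and> (\<forall>b\<in>B. \<forall>c\<in>B. b \<noteq> c \<longrightarrow> inn b c = 0)"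
definition onb :: "'v set \<Rightarrow> bool" where
  "onb B \<longleftrightarrow> orthon B \<and> closure (span B) = UNIV"

lemma orthon_subset: "orthon B \<Longrightarrow> F \<subseteq> B \<Longrightarrow> orthon F"
  unfolding orthon_def by (simp add: subset_iff)

lemma sum_inn_delta:
  assumes o: "orthon F" and fin: "finite F" and c: "c \<in> F"
  shows "(\<Sum>b\<in>F. r b * inn b c) = r c"
proof -
  have "(\<Sum>b\<in>F. r b * inn b c) = (\<Sum>b\<in>F. if b = c then r c else 0)"
  proof (rule sum.cong)
    fix b assume "b \<in> F"
    then show "r b * inn b c = (if b = c then r c else 0)"
      using o c unfolding orthon_def by (cases "b = c") auto
  qed simp
  also have "\<dots> = r c" using fin c by simp
  finally show ?thesis .
qed

lemma proj_facts:
  fixes x :: 'v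
  assumes o: "orthon F" and fin: "finite F"
  defines "p \<equiv> (\<Sum>b\<in>F. inn x b *\<^sub>R b)"
  shows proj_inn: "\<And>c. c \<in> F \<Longrightarrow> inn p c = inn x c"
    and proj_orth: "\<And>r. inn (x - p) (\<Sum>b\<in>F. r b *\<^sub>R b) = 0"
    and proj_norm: "(norm x)^2 = (norm (x - p))^2 + (\<Sum>b\<in>F. (inn x b)^2)"
proof -
  show pc: "inn p c = inn x c" if "c \<in> F" for c
    unfolding p_def inn_sum using sum_inn_delta[OF o fin that, of "\<lambda>b. inn x b"]
    by (simp add: inn_scale)
  show po: "inn (x - p) (\<Sum>b\<in>F. r b *\<^sub>R b) = 0" for r
    unfolding inn_sum2 by (simp add: inn_scale2 inn_diff pc)
  have pp: "inn p p = (\<Sum>b\<in>F. (inn x b)^2)"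
    by (subst (2) p_def) (simp add: inn_sum2 inn_scale2 pc power2_eq_square)
  have "(norm x)^2 = inn ((x - p) + p) ((x - p) + p)" by (simp add: inn_self del: diff_add_cancel)
  also have "\<dots> = inn (x - p) (x - p) + 2 * inn (x - p) p + inn p p"
    unfolding inn_add inn_add2 inn_sym[of p "x - p"] by simp
  also have "inn (x - p) p = 0" using po[of "\<lambda>b. inn x b"] unfolding p_def .
  finally have "(norm x)^2 = inn (x - p) (x - p) + inn p p" by simp
  then show "(norm x)^2 = (norm (x - p))^2 + (\<Sum>b\<in>F. (inn x b)^2)"
    unfolding pp inn_self[of "x - p"] .
qed

lemma bessel:
  assumes o: "orthon F" and fin: "finite F"
  shows "(\<Sum>b\<in>F. (inn x b)^2) \<le> (norm x)^2"
  using proj_norm[OF o fin, of x] by simp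

lemma best_approx:
  assumes o: "orthon F" and fin: "finite F"
  shows "(norm x)^2 - (\<Sum>b\<in>F. (inn x b)^2) \<le> (norm (x - (\<Sum>b\<in>F. r b *\<^sub>R b)))^2"
proof -
  define p where "p = (\<Sum>b\<in>F. inn x b *\<^sub>R b)"
  define y where "y = (\<Sum>b\<in>F. r b *\<^sub>R b)"
  have py: "p - y = (\<Sum>b\<in>F. (inn x b - r b) *\<^sub>R b)"
    unfolding p_def y_def by (simp add: sum_subtractf scaleR_diff_left)
  have o0: "inn (x - p) (p - y) = 0" unfolding py unfolding p_def by (rule proj_orth[OF o fin])
  have "(norm (x - y))^2 = inn ((x - p) + (p - y)) ((x - p) + (p - y))" by (simp add: inn_self del: diff_add_cancel)
  also have "\<dots> = inn (x - p) (x - p) + 2 * inn (x - p) (p - y) + inn (p - y) (p - y)"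
    unfolding inn_add inn_add2 inn_sym[of "p - y" "x - p"] by simp
  also have "\<dots> \<ge> (norm (x - p))^2" using o0 by (simp add: inn_self)
  finally have "(norm (x - p))^2 \<le> (norm (x - y))^2" .
  moreover have "(norm x)^2 = (norm (x - p))^2 + (\<Sum>b\<in>F. (inn x b)^2)"
    unfolding p_def by (rule proj_norm[OF o fin])
  ultimately show ?thesis unfolding y_def by simp
qed

lemma parseval:
  assumes B: "onb B"
  shows "((\<lambda>b. (inn x b)^2) has_sum (norm x)^2) B"
proof -
  have o: "orthon B" using B onb_def by blast
  have sm: "(\<lambda>b. (inn x b)^2) summable_on B"
  proof (rule nonneg_bdd_above_summable_on)
    show "bdd_above (sum (\<lambda>b. (inn x b)^2) ` {F. F \<subseteq> B \<and> finite F})"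
      using bessel orthon_subset[OF o] by (intro bdd_aboveI[of _ "(norm x)^2"]) auto
  qed simp
  define s where "s = infsum (\<lambda>b. (inn x b)^2) B"
  have le: "s \<le> (norm x)^2" unfolding s_def
    using sm bessel orthon_subset[OF o] by (intro infsum_le_finite_sums) auto
  have ge: "(norm x)^2 \<le> s"
  proof (rule ccontr)
    assume "\<not> (norm x)^2 \<le> s"
    then have d: "(norm x)^2 - s > 0" by simp
    define e where "e = sqrt ((norm x)^2 - s)"
    have e: "e > 0" using d unfolding e_def by simp
    have "x \<in> closure (span B)" using B unfolding onb_def by simp
    then obtain y where y: "y \<in> span B" "dist y x < e" using e closure_approachable by metis
    obtain t r where tr: "finite t" "t \<subseteq> B" "y = (\<Sum>a\<in>t. r a *\<^sub>R a)"
      using y(1) unfolding span_explicit by blast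
    have ot: "orthon t" using orthon_subset[OF o tr(2)] .
    have "(norm x)^2 - (\<Sum>b\<in>t. (inn x b)^2) \<le> (norm (x - y))^2"
      using best_approx[OF ot tr(1)] tr(3) by simp
    also have "\<dots> < e^2" using y(2) by (simp add: dist_norm norm_minus_commute power_strict_mono)
    also have "\<dots> = (norm x)^2 - s" unfolding e_def using d by simp
    finally have "s < (\<Sum>b\<in>t. (inn x b)^2)" by simp
    moreover have "(\<Sum>b\<in>t. (inn x b)^2) \<le> s" unfolding s_def
      using sm tr by (intro finite_sum_le_infsum) auto
    ultimately show False by simp
  qed
  show ?thesis using sm le ge s_def has_sum_infsum by (metis antisym)
qed

lemma has_sum_finsum:
  fixes f :: "'i \<Rightarrow> 'j \<Rightarrow> real"
  assumes "finite F" "\<And>b. b \<in> F \<Longrightarrow> (f b has_sum s b) A"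
  shows "((\<lambda>c. \<Sum>b\<in>F. f b c) has_sum (\<Sum>b\<in>F. s b)) A"
  using assms
proof (induction F rule: finite_induct)
  case (insert a F)
  have "((\<lambda>c. f a c + (\<Sum>b\<in>F. f b c)) has_sum (s a + (\<Sum>b\<in>F. s b))) A"
    by (rule has_sum_add) (use insert in auto)
  then show ?case using insert by simp
qed simp

lemma hs_indep:
  assumes B1: "onb B1" and B2: "onb B2" and S: "\<And>x y. inn (S x) y = inn x (S y)"
    and sm: "(\<lambda>c. (norm (S c))^2) summable_on B2"
  shows "(\<lambda>b. (norm (S b))^2) summable_on B1"
proof (rule nonneg_bdd_above_summable_on)
  have o1: "orthon B1" using B1 onb_def by blast
  show "bdd_above (sum (\<lambda>b. (norm (S b))^2) ` {F. F \<subseteq> B1 \<and> finite F})"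
  proof (rule bdd_aboveI[of _ "infsum (\<lambda>c. (norm (S c))^2) B2"], clarsimp)
    fix F assume F: "F \<subseteq> B1" "finite F"
    have oF: "orthon F" using orthon_subset[OF o1 F(1)] .
    have hs: "((\<lambda>c. \<Sum>b\<in>F. (inn (S b) c)^2) has_sum (\<Sum>b\<in>F. (norm (S b))^2)) B2"
      using F(2) parseval[OF B2] by (intro has_sum_finsum) auto
    have "(\<Sum>b\<in>F. (norm (S b))^2) = infsum (\<lambda>c. \<Sum>b\<in>F. (inn (S b) c)^2) B2"
      using hs infsumI by metis
    also have "\<dots> \<le> infsum (\<lambda>c. (norm (S c))^2) B2"
    proof (rule infsum_mono)
      show "(\<lambda>c. \<Sum>b\<in>F. (inn (S b) c)^2) summable_on B2" using hs has_sum_imp_summable by blast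
      show "(\<lambda>c. (norm (S c))^2) summable_on B2" by (rule sm)
      fix c
      have "(\<Sum>b\<in>F. (inn (S b) c)^2) = (\<Sum>b\<in>F. (inn (S c) b)^2)"
        using S inn_sym by (intro sum.cong) (auto simp: power2_eq_square)
      also have "\<dots> \<le> (norm (S c))^2" by (rule bessel[OF oF F(2)])
      finally show "(\<Sum>b\<in>F. (inn (S b) c)^2) \<le> (norm (S c))^2" .
    qed
    finally show "(\<Sum>b\<in>F. (norm (S b))^2) \<le> infsum (\<lambda>c. (norm (S c))^2) B2" .
  qed
qed simp

end



inductive_set NN :: "('v::real_normed_vector \<Rightarrow> 'v) \<Rightarrow> ('v \<Rightarrow> 'v) set" for Y where
  pw: "(Y ^^ k) \<in> NN Y"
| ad: "U \<in> NN Y \<Longrightarrow> V \<in> NN Y \<Longrightarrow> (\<lambda>x. U x + V x) \<in> NN Y"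
| sm: "c \<ge> 0 \<Longrightarrow> U \<in> NN Y \<Longrightarrow> (\<lambda>x. c *\<^sub>R U x) \<in> NN Y"

lemma bl_funpow: fixes Y :: "'v::real_normed_vector \<Rightarrow> 'v" shows "bounded_linear Y \<Longrightarrow> bounded_linear (Y ^^ k)"
proof (induction k)
  case 0
  show ?case by (simp add: id_def)
next
  case (Suc k)
  have "bounded_linear (\<lambda>x. Y ((Y ^^ k) x))" by (rule bounded_linear_compose) (use Suc in auto)
  then show ?case by (simp add: o_def)
qed

lemma NN_bl: "U \<in> NN Y \<Longrightarrow> bounded_linear Y \<Longrightarrow> bounded_linear U"
proof (induction rule: NN.induct)
  case (pw k) then show ?case by (rule bl_funpow)
next
  case (ad U V) then show ?case by (simp add: bounded_linear_add)
next
  case (sm c U) then show ?case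
    using bounded_linear_compose[OF bounded_linear_scaleR_right[of c], of U] by simp
qed

lemma NN_lin: "U \<in> NN Y \<Longrightarrow> bounded_linear Y \<Longrightarrow> linear U"
  using NN_bl bounded_linear.linear by blast

lemma NN_comm:
  assumes "U \<in> NN Y" "linear L" "\<And>x. L (Y x) = Y (L x)"
  shows "L (U x) = U (L x)"
  using assms
proof (induction arbitrary: x rule: NN.induct)
  case (pw k)
  show ?case
  proof (induction k arbitrary: x)
    case (Suc k) then show ?case using pw by simp
  qed simp
next
  case (ad U V) then show ?case by (simp add: linear_add)
next
  case (sm c U) then show ?case by (simp add: linear_scale)
qed

lemma NN_zero: "(\<lambda>x. 0) \<in> NN Y"
  using NN.sm[where c=0 and U="Y ^^ 0" and Y=Y] NN.pw[where Y=Y and k=0] by simp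

lemma NN_Y: "Y \<in> NN Y"
  using NN.pw[where Y=Y and k=1] by simp

lemma NN_comp_pw:
  assumes "U \<in> NN Y"
  shows "(\<lambda>x. U ((Y ^^ k) x)) \<in> NN Y"
  using assms
proof (induction rule: NN.induct)
  case (pw j)
  have "(\<lambda>x. (Y ^^ j) ((Y ^^ k) x)) = Y ^^ (j + k)" by (simp add: funpow_add o_def)
  then show ?case using NN.pw by metis
next
  case (ad U V) then show ?case using NN.ad by blast
next
  case (sm c U) then show ?case using NN.sm by blast
qed

lemma NN_comp:
  assumes "V \<in> NN Y" "U \<in> NN Y" "bounded_linear Y"
  shows "(\<lambda>x. U (V x)) \<in> NN Y"
  using assms
proof (induction rule: NN.induct)
  case (pw k) then show ?case using NN_comp_pw by blast
next
  case (ad V1 V2)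
  have l: "linear U" using NN_lin ad by blast
  have "(\<lambda>x. U (V1 x + V2 x)) = (\<lambda>x. U (V1 x) + U (V2 x))" using l by (simp add: linear_add)
  then show ?case using NN.ad ad by metis
next
  case (sm c V)
  have l: "linear U" using NN_lin sm by blast
  have "(\<lambda>x. U (c *\<^sub>R V x)) = (\<lambda>x. c *\<^sub>R U (V x))" using l by (simp add: linear_scale)
  then show ?case using NN.sm sm by metis
qed

lemma NN_comm2:
  assumes "U \<in> NN Y" "V \<in> NN Y" "bounded_linear Y"
  shows "U (V x) = V (U x)"
proof -
  have "Y (V x) = V (Y x)" for x
    using NN_comm[OF assms(2), of Y] assms(3) bounded_linear.linear by blast
  then show ?thesis using NN_comm[OF assms(1), of V] NN_lin[OF assms(2,3)] by metis
qed

primrec Zs :: "('v::real_normed_vector \<Rightarrow> 'v) \<Rightarrow> nat \<Rightarrow> 'v \<Rightarrow> 'v" where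
  "Zs Y 0 = (\<lambda>x. 0)"
| "Zs Y (Suc n) = (\<lambda>x. (1/2) *\<^sub>R (Y x + Zs Y n (Zs Y n x)))"

lemma Zs_NN: "bounded_linear Y \<Longrightarrow> Zs Y n \<in> NN Y"
proof (induction n)
  case 0 then show ?case using NN_zero by simp
next
  case (Suc n)
  have "(\<lambda>x. Zs Y n (Zs Y n x)) \<in> NN Y" using NN_comp Suc by blast
  then have "(\<lambda>x. Y x + Zs Y n (Zs Y n x)) \<in> NN Y" using NN.ad NN_Y by blast
  then show ?case using NN.sm[of "1/2"] by simp
qed

lemma Zs_diff_NN:
  assumes Y: "bounded_linear Y"
  shows "(\<lambda>x. Zs Y (Suc n) x - Zs Y n x) \<in> NN Y"
proof (induction n)
  case 0
  have "(\<lambda>x. (1/2) *\<^sub>R Y x) \<in> NN Y" by (rule NN.sm) (auto intro: NN_Y)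
  then show ?case by simp
next
  case (Suc n)
  define Z1 where "Z1 = Zs Y (Suc n)"
  define Z0 where "Z0 = Zs Y n"
  have N1: "Z1 \<in> NN Y" and N0: "Z0 \<in> NN Y" using Zs_NN Y unfolding Z1_def Z0_def by blast+
  have l1: "linear Z1" and l0: "linear Z0" using NN_lin N1 N0 Y by blast+
  have c: "Z1 (Z0 x) = Z0 (Z1 x)" for x using NN_comm2 N1 N0 Y by blast
  have W: "(\<lambda>x. Z1 x + Z0 x) \<in> NN Y" using NN.ad N1 N0 by blast
  have D: "(\<lambda>x. Z1 x - Z0 x) \<in> NN Y" using Suc unfolding Z1_def Z0_def .
  have "(\<lambda>x. (1/2) *\<^sub>R ((\<lambda>x. Z1 x + Z0 x) ((\<lambda>x. Z1 x - Z0 x) x))) \<in> NN Y"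
    using NN.sm[of "1/2"] NN_comp[OF D W Y] by simp
  moreover have "(\<lambda>x. (1/2) *\<^sub>R ((\<lambda>x. Z1 x + Z0 x) ((\<lambda>x. Z1 x - Z0 x) x)))
      = (\<lambda>x. Zs Y (Suc (Suc n)) x - Zs Y (Suc n) x)"
  proof
    fix x
    have "Z1 (Z1 x - Z0 x) + Z0 (Z1 x - Z0 x) = Z1 (Z1 x) - Z0 (Z0 x)"
      using c[of x] by (simp add: linear_diff[OF l1] linear_diff[OF l0])
    moreover have "Zs Y (Suc (Suc n)) x - Zs Y (Suc n) x = (1/2) *\<^sub>R (Z1 (Z1 x) - Z0 (Z0 x))"
      unfolding Z1_def Z0_def by (simp add: algebra_simps)
    ultimately show "(1/2) *\<^sub>R ((\<lambda>x. Z1 x + Z0 x) ((\<lambda>x. Z1 x - Z0 x) x))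
      = Zs Y (Suc (Suc n)) x - Zs Y (Suc n) x" by simp
  qed
  ultimately show ?case by simp
qed

lemma Zs_mono_NN:
  assumes Y: "bounded_linear Y" and nm: "n \<le> m"
  shows "(\<lambda>x. Zs Y m x - Zs Y n x) \<in> NN Y"
  using nm
proof (induction m rule: dec_induct)
  case base then show ?case using NN_zero by simp
next
  case (step m)
  have "(\<lambda>x. (Zs Y (Suc m) x - Zs Y m x) + (Zs Y m x - Zs Y n x)) \<in> NN Y"
    using NN.ad[OF Zs_diff_NN[OF Y, of m] step(3)] by simp
  then show ?case by simp
qed



context hil begin

lemma pw_sa:
  assumes Ys: "\<And>x y. inn (Y x) y = inn x (Y y)"
  shows "inn ((Y ^^ k) x) y = inn x ((Y ^^ k) y)"
proof (induction k arbitrary: x y)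
  case (Suc k)
  have "inn ((Y ^^ Suc k) x) y = inn ((Y ^^ k) x) (Y y)" using Ys by simp
  also have "\<dots> = inn x ((Y ^^ k) (Y y))" by (rule Suc)
  also have "(Y ^^ k) (Y y) = (Y ^^ Suc k) y" by (simp add: funpow_swap1)
  finally show ?case .
qed simp

lemma NN_sa:
  assumes "U \<in> NN Y" "\<And>x y. inn (Y x) y = inn x (Y y)"
  shows "inn (U x) y = inn x (U y)"
  using assms
proof (induction arbitrary: x y rule: NN.induct)
  case (pw k) then show ?case using pw_sa by blast
next
  case (ad U V) then show ?case by (simp add: inn_add inn_add2)
next
  case (sm c U) then show ?case by (simp add: inn_scale inn_scale2)
qed

lemma NN_pos:
  assumes "U \<in> NN Y" "\<And>x y. inn (Y x) y = inn x (Y y)" "\<And>x. 0 \<le> inn (Y x) x"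
  shows "0 \<le> inn (U x) x"
  using assms
proof (induction arbitrary: x rule: NN.induct)
  case (pw k)
  obtain j where "k = j + j \<or> k = j + (1 + j)"
  proof -
    have "k = k div 2 + k div 2 \<or> k = k div 2 + (1 + k div 2)" by presburger
    then show ?thesis using that by blast
  qed
  then show ?case
  proof
    assume k: "k = j + j"
    have "inn ((Y ^^ k) x) x = inn ((Y ^^ j) ((Y ^^ j) x)) x" unfolding k funpow_add by simp
    also have "\<dots> = inn ((Y ^^ j) x) ((Y ^^ j) x)" by (rule pw_sa[OF pw(1)])
    finally show ?thesis by (simp add: inn_self)
  next
    assume k: "k = j + (1 + j)"
    have "inn ((Y ^^ k) x) x = inn ((Y ^^ j) (Y ((Y ^^ j) x))) x" unfolding k funpow_add by simp
    also have "\<dots> = inn (Y ((Y ^^ j) x)) ((Y ^^ j) x)" by (rule pw_sa[OF pw(1)])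
    finally show ?thesis using pw(2) by simp
  qed
next
  case (ad U V) then show ?case by (simp add: inn_add)
next
  case (sm c U) then show ?case by (simp add: inn_scale)
qed

lemma Zs_norm:
  assumes Yn: "\<And>x. norm (Y x) \<le> norm x"
  shows "norm (Zs Y n x) \<le> norm x"
proof (induction n arbitrary: x)
  case (Suc n)
  have "norm (Zs Y (Suc n) x) \<le> (1/2) * (norm (Y x) + norm (Zs Y n (Zs Y n x)))"
    by (simp add: norm_triangle_ineq)
  also have "\<dots> \<le> (1/2) * (norm x + norm x)"
    using Yn[of x] Suc[of "Zs Y n x"] Suc[of x] by simp
  finally show ?case by simp
qed simp

end



definition Zlim :: "('v::real_normed_vector \<Rightarrow> 'v) \<Rightarrow> 'v \<Rightarrow> 'v" where
  "Zlim Y x = lim (\<lambda>n. Zs Y n x)"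

context hil begin
context
  fixes Y :: "'v \<Rightarrow> 'v"
  assumes Yb: "bounded_linear Y" and Ys: "\<And>x y. inn (Y x) y = inn x (Y y)"
    and Yp: "\<And>x. 0 \<le> inn (Y x) x" and Yn: "\<And>x. norm (Y x) \<le> norm x"
begin

lemma Zs_lin: "linear (Zs Y n)"
  using NN_lin[OF Zs_NN[OF Yb] Yb] .

lemma Zs_cauchy: "Cauchy (\<lambda>n. Zs Y n x)"
proof -
  define q where "q n = inn (Zs Y n x) x" for n
  have Dfacts: "q n \<le> q m \<and> norm (Zs Y m x - Zs Y n x) ^ 4 \<le> (q m - q n) * (8 * (norm x)^2)"
    if "n \<le> m" for m n
  proof -
    define D where "D = (\<lambda>x. Zs Y m x - Zs Y n x)"
    have DN: "D \<in> NN Y" unfolding D_def using Zs_mono_NN[OF Yb that] .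
    have Dl: "linear D" using NN_lin[OF DN Yb] .
    have Ds: "\<And>a b. inn (D a) b = inn a (D b)" using NN_sa[OF DN Ys] .
    have Dp: "\<And>a. 0 \<le> inn (D a) a" using NN_pos[OF DN Ys Yp] .
    have Dn: "norm (D z) \<le> 2 * norm z" for z
    proof -
      have "norm (D z) \<le> norm (Zs Y m z) + norm (Zs Y n z)" unfolding D_def by (rule norm_triangle_ineq4)
      also have "\<dots> \<le> norm z + norm z" using Zs_norm[OF Yn] by (intro add_mono)
      finally show ?thesis by simp
    qed
    have qd: "inn (D x) x = q m - q n" unfolding D_def q_def by (simp add: inn_diff)
    have g: "(inn (D x) (D x))^2 \<le> inn (D x) x * inn (D (D x)) (D x)" using gcs[OF Dl Ds Dp] .
    have "inn (D (D x)) (D x) \<le> norm (D (D x)) * norm (D x)"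
      using cs[of "D (D x)" "D x"] by simp
    also have "\<dots> \<le> (2 * norm (D x)) * norm (D x)" using Dn by (intro mult_right_mono) auto
    also have "\<dots> \<le> (2 * (2 * norm x)) * (2 * norm x)" using Dn[of x]
      by (intro mult_mono) auto
    finally have i8: "inn (D (D x)) (D x) \<le> 8 * (norm x)^2" by (simp add: power2_eq_square)
    have nn: "0 \<le> q m - q n" using Dp[of x] qd by simp
    have "(inn (D x) (D x))^2 = norm (D x) ^ 4" by (simp add: inn_self flip: power_mult)
    then have "norm (D x) ^ 4 \<le> (q m - q n) * inn (D (D x)) (D x)" using g qd by simp
    also have "\<dots> \<le> (q m - q n) * (8 * (norm x)^2)" using i8 nn by (rule mult_left_mono)
    finally show ?thesis using nn unfolding D_def by simp
  qed
  have inc: "incseq q" unfolding incseq_def using Dfacts by blast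
  have bnd: "\<forall>n. q n \<le> (norm x)^2"
  proof
    fix n
    have "q n \<le> norm (Zs Y n x) * norm x" unfolding q_def using cs[of "Zs Y n x" x] by simp
    also have "\<dots> \<le> norm x * norm x" using Zs_norm[OF Yn] by (intro mult_right_mono) auto
    finally show "q n \<le> (norm x)^2" by (simp add: power2_eq_square)
  qed
  obtain L where "q \<longlonglongrightarrow> L" using incseq_convergent[OF inc bnd] by blast
  then have cq: "Cauchy q" by (rule LIMSEQ_imp_Cauchy)
  show ?thesis
  proof (rule CauchyI)
    fix e :: real assume e: "0 < e"
    define e' where "e' = e^4 / (8 * (norm x)^2 + 1)"
    have pos8: "0 < 8 * (norm x)^2 + 1" by (simp add: add_nonneg_pos)
    then have e': "0 < e'" using e unfolding e'_def by (intro divide_pos_pos) auto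
    obtain M where M: "\<forall>m\<ge>M. \<forall>n\<ge>M. norm (q m - q n) < e'" using CauchyD[OF cq e'] by blast
    have lt: "norm (Zs Y m x - Zs Y n x) < e" if mn: "m \<ge> M" "n \<ge> M" "n \<le> m" for m n
    proof -
      have "norm (Zs Y m x - Zs Y n x)^4 \<le> (q m - q n) * (8 * (norm x)^2)"
        using Dfacts[OF mn(3)] by simp
      also have "\<dots> \<le> e' * (8 * (norm x)^2)"
      proof (rule mult_right_mono)
        have "norm (q m - q n) < e'" using M mn(1,2) by simp
        then have "\<bar>q m - q n\<bar> < e'" by simp
        then show "q m - q n \<le> e'" by simp
      qed simp
      also have "\<dots> < e' * (8 * (norm x)^2 + 1)" using e' by (simp add: distrib_left)
      also have "\<dots> = e^4" unfolding e'_def using pos8 by (simp add: field_simps)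
      finally have "norm (Zs Y m x - Zs Y n x) ^ 4 < e ^ 4" .
      then show ?thesis by (rule power_less_imp_less_base) (use e in simp)
    qed
    show "\<exists>M. \<forall>m\<ge>M. \<forall>n\<ge>M. norm (Zs Y m x - Zs Y n x) < e"
    proof (intro exI allI impI)
      fix m n assume "m \<ge> M" "n \<ge> M"
      then show "norm (Zs Y m x - Zs Y n x) < e"
      proof (cases "n \<le> m")
        case True then show ?thesis using lt[OF \<open>m \<ge> M\<close> \<open>n \<ge> M\<close>] by simp
      next
        case False
        then have "norm (Zs Y n x - Zs Y m x) < e" using lt[OF \<open>n \<ge> M\<close> \<open>m \<ge> M\<close>] by simp
        then show ?thesis by (simp add: norm_minus_commute)
      qed
    qed
  qed
qed

lemma Zl_lim: "(\<lambda>n. Zs Y n x) \<longlonglongrightarrow> Zlim Y x"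
  unfolding Zlim_def using inn_complete[OF Zs_cauchy] convergent_LIMSEQ_iff by blast

lemma Zl_add: "Zlim Y (a + b) = Zlim Y a + Zlim Y b"
proof (rule LIMSEQ_unique[OF Zl_lim])
  have "(\<lambda>n. Zs Y n a + Zs Y n b) \<longlonglongrightarrow> Zlim Y a + Zlim Y b"
    by (intro tendsto_add Zl_lim)
  then show "(\<lambda>n. Zs Y n (a + b)) \<longlonglongrightarrow> Zlim Y a + Zlim Y b"
    by (simp add: linear_add[OF Zs_lin])
qed

lemma Zl_scale: "Zlim Y (r *\<^sub>R a) = r *\<^sub>R Zlim Y a"
proof (rule LIMSEQ_unique[OF Zl_lim])
  have "(\<lambda>n. r *\<^sub>R Zs Y n a) \<longlonglongrightarrow> r *\<^sub>R Zlim Y a"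
    by (intro tendsto_scaleR tendsto_const Zl_lim)
  then show "(\<lambda>n. Zs Y n (r *\<^sub>R a)) \<longlonglongrightarrow> r *\<^sub>R Zlim Y a"
    by (simp add: linear_scale[OF Zs_lin])
qed

lemma Zl_norm: "norm (Zlim Y x) \<le> norm x"
  by (rule LIMSEQ_le_const2[OF tendsto_norm[OF Zl_lim]]) (use Zs_norm[OF Yn] in auto)

lemma Zl_bl: "bounded_linear (Zlim Y)"
  by (rule bounded_linear_intro[where K=1]) (auto simp: Zl_add Zl_scale Zl_norm)

lemma Zl_sa: "inn (Zlim Y a) b = inn a (Zlim Y b)"
proof (rule LIMSEQ_unique)
  show "(\<lambda>n. inn (Zs Y n a) b) \<longlonglongrightarrow> inn (Zlim Y a) b"
    by (intro inn_tendsto Zl_lim tendsto_const)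
  have "(\<lambda>n. inn a (Zs Y n b)) \<longlonglongrightarrow> inn a (Zlim Y b)"
    by (intro inn_tendsto Zl_lim tendsto_const)
  then show "(\<lambda>n. inn (Zs Y n a) b) \<longlonglongrightarrow> inn a (Zlim Y b)"
    using NN_sa[OF Zs_NN[OF Yb] Ys] by simp
qed

lemma Zl_comm:
  assumes L: "bounded_linear L" and c: "\<And>x. L (Y x) = Y (L x)"
  shows "L (Zlim Y x) = Zlim Y (L x)"
proof (rule LIMSEQ_unique)
  show "(\<lambda>n. L (Zs Y n x)) \<longlonglongrightarrow> L (Zlim Y x)"
    by (rule bounded_linear.tendsto[OF L Zl_lim])
  have "L (Zs Y n x) = Zs Y n (L x)" for n
    using NN_comm[OF Zs_NN[OF Yb], of L] L c bounded_linear.linear by blast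
  then show "(\<lambda>n. L (Zs Y n x)) \<longlonglongrightarrow> Zlim Y (L x)" using Zl_lim by simp
qed

lemma Zl_inn_le: "inn (Zlim Y x) x \<le> (norm x)^2"
proof -
  have "inn (Zlim Y x) x \<le> norm (Zlim Y x) * norm x" using cs[of "Zlim Y x" x] by simp
  also have "\<dots> \<le> norm x * norm x" using Zl_norm by (intro mult_right_mono) auto
  finally show ?thesis by (simp add: power2_eq_square)
qed

lemma Zl_fix: "Zlim Y x = (1/2) *\<^sub>R (Y x + Zlim Y (Zlim Y x))"
proof (rule LIMSEQ_unique)
  show "(\<lambda>n. Zs Y (Suc n) x) \<longlonglongrightarrow> Zlim Y x" by (rule LIMSEQ_Suc[OF Zl_lim])
  define z where "z = Zlim Y x"
  have t: "(\<lambda>n. Zs Y n (Zs Y n x)) \<longlonglongrightarrow> Zlim Y z"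
  proof -
    have "(\<lambda>n. Zs Y n (Zs Y n x) - Zlim Y z) \<longlonglongrightarrow> 0"
    proof (rule Lim_null_comparison)
      show "\<forall>\<^sub>F n in sequentially. norm (Zs Y n (Zs Y n x) - Zlim Y z)
          \<le> norm (Zs Y n x - z) + norm (Zs Y n z - Zlim Y z)"
      proof (intro always_eventually allI)
        fix n
        have eq: "Zs Y n (Zs Y n x) - Zlim Y z = Zs Y n (Zs Y n x - z) + (Zs Y n z - Zlim Y z)"
          by (simp add: linear_diff[OF Zs_lin])
        then have "norm (Zs Y n (Zs Y n x) - Zlim Y z) \<le> norm (Zs Y n (Zs Y n x - z)) + norm (Zs Y n z - Zlim Y z)"
          by (subst eq) (rule norm_triangle_ineq)
        also have "\<dots> \<le> norm (Zs Y n x - z) + norm (Zs Y n z - Zlim Y z)"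
          using Zs_norm[OF Yn] by (intro add_right_mono)
        finally show "norm (Zs Y n (Zs Y n x) - Zlim Y z) \<le> norm (Zs Y n x - z) + norm (Zs Y n z - Zlim Y z)" .
      qed
      show "(\<lambda>n. norm (Zs Y n x - z) + norm (Zs Y n z - Zlim Y z)) \<longlonglongrightarrow> 0"
        using tendsto_add[OF tendsto_norm_zero[OF LIM_zero[OF Zl_lim[of x]]]
            tendsto_norm_zero[OF LIM_zero[OF Zl_lim[of z]]]] unfolding z_def by simp
    qed
    then show ?thesis by (rule LIM_zero_cancel)
  qed
  have "(\<lambda>n. (1/2) *\<^sub>R (Y x + Zs Y n (Zs Y n x))) \<longlonglongrightarrow> (1/2) *\<^sub>R (Y x + Zlim Y z)"
    by (intro tendsto_scaleR tendsto_add tendsto_const t)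
  then show "(\<lambda>n. Zs Y (Suc n) x) \<longlonglongrightarrow> (1/2) *\<^sub>R (Y x + Zlim Y (Zlim Y x))"
    unfolding z_def by simp
qed

end
end



definition Yop :: "('v::real_normed_vector \<Rightarrow> 'v) \<Rightarrow> real \<Rightarrow> 'v \<Rightarrow> 'v" where
  "Yop A K = (\<lambda>x. x - (1 / K^2) *\<^sub>R A (A x))"
definition Rt :: "('v::real_normed_vector \<Rightarrow> 'v) \<Rightarrow> real \<Rightarrow> 'v \<Rightarrow> 'v" where
  "Rt A K = (\<lambda>x. K *\<^sub>R (x - Zlim (Yop A K) x))"

context hil begin
context
  fixes A :: "'v \<Rightarrow> 'v" and K :: real
  assumes Ab: "bounded_linear A" and As: "\<And>x y. inn (A x) y = inn x (A y)"
    and Kp: "K > 0" and Kb: "\<And>x. norm (A x) \<le> K * norm x"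
begin

lemma Al: "linear A" using Ab bounded_linear.linear by blast

lemma Y_bl: "bounded_linear (Yop A K)"
  unfolding Yop_def
  by (intro bounded_linear_sub bounded_linear_ident bounded_linear_compose[OF bounded_linear_scaleR_right]
      bounded_linear_compose[OF Ab] Ab)

lemma Y_sa: "inn (Yop A K x) y = inn x (Yop A K y)"
proof -
  have "inn (A (A x)) y = inn x (A (A y))" using As by simp
  then show ?thesis unfolding Yop_def by (simp add: inn_diff inn_scale inn_scale2)
qed

lemma AA_inn: "inn (A (A x)) x = (norm (A x))^2"
  using As[of "A x" x] by (simp add: inn_self)

lemma Y_normsq: "(norm (Yop A K x))^2 \<le> (norm x)^2 - (norm (A x))^2 / K^2"
proof -
  define k where "k = 1 / K^2"
  have kp: "k > 0" unfolding k_def using Kp by simp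
  define a where "a = A (A x)"
  have "(norm (Yop A K x))^2 = inn (x - k *\<^sub>R a) (x - k *\<^sub>R a)"
    unfolding Yop_def k_def a_def by (simp add: inn_self)
  also have "\<dots> = inn x x - 2 * k * inn a x + k^2 * inn a a"
    using inn_sym[of x a] by (simp add: inn_diff inn_scale inn_scale2 power2_eq_square algebra_simps)
  also have "\<dots> = (norm x)^2 - 2 * k * (norm (A x))^2 + k^2 * (norm a)^2"
    unfolding a_def AA_inn by (simp add: inn_self)
  also have "\<dots> \<le> (norm x)^2 - 2 * k * (norm (A x))^2 + k^2 * (K^2 * (norm (A x))^2)"
  proof -
    have "norm a \<le> K * norm (A x)" unfolding a_def by (rule Kb)
    then have "(norm a)^2 \<le> (K * norm (A x))^2" by (intro power_mono) auto
    then show ?thesis by (simp add: power_mult_distrib mult_left_mono)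
  qed
  also have "\<dots> = (norm x)^2 - (norm (A x))^2 / K^2"
    unfolding k_def using Kp by (simp add: field_simps power2_eq_square)
  finally show ?thesis .
qed

lemma Y_norm: "norm (Yop A K x) \<le> norm x"
proof -
  have "(norm (Yop A K x))^2 \<le> (norm x)^2" using Y_normsq[of x] Kp
    by (smt (verit) divide_nonneg_pos zero_le_power2 zero_less_power)
  then show ?thesis by (rule power2_le_imp_le) simp
qed

lemma Y_pos: "0 \<le> inn (Yop A K x) x"
proof -
  have "inn (Yop A K x) x = (norm x)^2 - (norm (A x))^2 / K^2"
    unfolding Yop_def by (simp add: inn_diff inn_scale AA_inn inn_self)
  moreover have "(norm (A x))^2 \<le> (K * norm x)^2" using Kb[of x] by (intro power_mono) auto
  moreover have "(norm (A x))^2 / K^2 \<le> (norm x)^2"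
    using \<open>(norm (A x))^2 \<le> (K * norm x)^2\<close> Kp by (simp add: pos_divide_le_eq power_mult_distrib mult.commute)
  ultimately show ?thesis by simp
qed

lemma Y_comm:
  assumes L: "linear L" and c: "\<And>x. L (A x) = A (L x)"
  shows "L (Yop A K x) = Yop A K (L x)"
  unfolding Yop_def using c by (simp add: linear_diff[OF L] linear_scale[OF L])

lemmas Yfacts = Y_bl Y_sa Y_pos Y_norm

lemma Z_bl: "bounded_linear (Zlim (Yop A K))" using Zl_bl[OF Yfacts] .
lemma Z_lin: "linear (Zlim (Yop A K))" using Z_bl bounded_linear.linear by blast

lemma R_bl: "bounded_linear (Rt A K)"
  unfolding Rt_def
  by (intro bounded_linear_compose[OF bounded_linear_scaleR_right] bounded_linear_sub
      bounded_linear_ident Z_bl)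

lemma R_lin: "linear (Rt A K)" using R_bl bounded_linear.linear by blast

lemma R_sa: "inn (Rt A K x) y = inn x (Rt A K y)"
  unfolding Rt_def using Zl_sa[OF Yfacts, of x y] by (simp add: inn_scale inn_scale2 inn_diff)

lemma R_pos: "0 \<le> inn (Rt A K x) x"
proof -
  have "inn (Rt A K x) x = K * ((norm x)^2 - inn (Zlim (Yop A K) x) x)"
    unfolding Rt_def by (simp add: inn_scale inn_diff inn_self)
  then show ?thesis using Zl_inn_le[OF Yfacts, of x] Kp by simp
qed

lemma R_comm:
  assumes L: "bounded_linear L" and c: "\<And>x. L (A x) = A (L x)"
  shows "L (Rt A K x) = Rt A K (L x)"
proof -
  have l: "linear L" using L bounded_linear.linear by blast
  have "L (Zlim (Yop A K) x) = Zlim (Yop A K) (L x)"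
    using Zl_comm[OF Yfacts L] Y_comm[OF l c] by blast
  then show ?thesis unfolding Rt_def by (simp add: linear_diff[OF l] linear_scale[OF l])
qed

lemma R_A: "Rt A K (A x) = A (Rt A K x)"
  using R_comm[OF Ab, of x] by simp

lemma R_sq: "Rt A K (Rt A K x) = A (A x)"
proof -
  define Z where "Z = Zlim (Yop A K)"
  have Zl: "linear Z" unfolding Z_def by (rule Z_lin)
  have e: "Z x = (1/2) *\<^sub>R (Yop A K x + Z (Z x))"
    using Zl_fix[OF Yfacts, of x] unfolding Z_def .
  have fx: "Z x + Z x = Yop A K x + Z (Z x)"
  proof -
    have "Z x + Z x = 2 *\<^sub>R Z x" by (simp add: scaleR_2)
    also have "\<dots> = 2 *\<^sub>R ((1/2) *\<^sub>R (Yop A K x + Z (Z x)))" using e by (rule arg_cong)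
    also have "\<dots> = Yop A K x + Z (Z x)" by simp
    finally show ?thesis .
  qed
  have "Rt A K (Rt A K x) = K *\<^sub>R (K *\<^sub>R (x - Z x) - Z (K *\<^sub>R (x - Z x)))"
    unfolding Rt_def Z_def by simp
  also have "\<dots> = (K * K) *\<^sub>R (x - (Z x + Z x) + Z (Z x))"
    by (simp add: linear_scale[OF Zl] linear_diff[OF Zl] algebra_simps)
  also have "x - (Z x + Z x) + Z (Z x) = x - Yop A K x" using fx by simp
  also have "\<dots> = (1 / K^2) *\<^sub>R A (A x)" unfolding Yop_def by simp
  finally show ?thesis using Kp by (simp add: power2_eq_square)
qed

lemma R_norm: "norm (Rt A K x) = norm (A x)"
proof -
  have "(norm (Rt A K x))^2 = inn (Rt A K (Rt A K x)) x"
    using R_sa[of "Rt A K x" x] inn_sym[of "Rt A K x" "Rt A K x"] by (simp add: inn_self inn_sym[of x])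
  also have "\<dots> = (norm (A x))^2" unfolding R_sq by (rule AA_inn)
  finally show ?thesis using power2_eq_imp_eq by (metis norm_ge_zero)
qed

end
end



context hil begin
context
  fixes A :: "'v \<Rightarrow> 'v" and K :: real
  assumes Ab: "bounded_linear A" and As: "\<And>x y. inn (A x) y = inn x (A y)"
    and Kp: "K > 0" and Kb: "\<And>x. norm (A x) \<le> K * norm x"
begin

abbreviation "YY \<equiv> Yop A K"
abbreviation "RR \<equiv> Rt A K"

lemma absA_range: "\<bar>inn (A (RR y)) (RR y)\<bar> \<le> inn (RR (RR y)) (RR y)"
proof -
  have Rl: "linear RR" using R_lin[OF Ab As Kp Kb] .
  have Rs: "\<And>a b. inn (RR a) b = inn a (RR b)" using R_sa[OF Ab As Kp Kb] .
  have Rp: "\<And>a. 0 \<le> inn (RR a) a" using R_pos[OF Ab As Kp Kb] .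
  have RA: "\<And>a. RR (A a) = A (RR a)" using R_A[OF Ab As Kp Kb] .
  have Rq: "\<And>a. RR (RR a) = A (A a)" using R_sq[OF Ab As Kp Kb] .
  have e1: "inn (A (RR y)) (RR y) = inn (RR (A y)) (RR y)" using RA[of y] by simp
  have g: "(inn (RR (A y)) (RR y))^2 \<le> inn (RR (A y)) (A y) * inn (RR (RR y)) (RR y)"
    by (rule gcs[OF Rl Rs Rp])
  have "inn (RR (A y)) (A y) = inn (A (RR (A y))) y" using As[of "RR (A y)" y] by simp
  also have "A (RR (A y)) = RR (A (A y))" using RA[of "A y"] by simp
  also have "A (A y) = RR (RR y)" using Rq[of y] by simp
  also have "inn (RR (RR (RR y))) y = inn (RR (RR y)) (RR y)" by (rule Rs)
  finally have e2: "inn (RR (A y)) (A y) = inn (RR (RR y)) (RR y)" .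
  have "(inn (A (RR y)) (RR y))^2 \<le> (inn (RR (RR y)) (RR y))^2"
    using g unfolding e1 e2 by (simp add: power2_eq_square)
  then have "\<bar>inn (A (RR y)) (RR y)\<bar> \<le> \<bar>inn (RR (RR y)) (RR y)\<bar>" using abs_le_square_iff by blast
  then show ?thesis using Rp[of "RR y"] by simp
qed

lemma pw_shift: "inn ((YY ^^ a) u) ((YY ^^ b) w) = inn ((YY ^^ (b + a)) u) w"
proof -
  have "inn ((YY ^^ b) ((YY ^^ a) u)) w = inn ((YY ^^ a) u) ((YY ^^ b) w)"
    by (rule pw_sa[OF Y_sa[OF Ab As Kp Kb]])
  then show ?thesis by (simp add: funpow_add)
qed

lemma absA: "\<bar>inn (A x) x\<bar> \<le> inn (RR x) x"
proof -
  have Yb: "bounded_linear YY" using Y_bl[OF Ab As Kp Kb] .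
  have Yl: "linear YY" using Yb bounded_linear.linear by blast
  have Yn: "\<And>z. norm (YY z) \<le> norm z" using Y_norm[OF Ab As Kp Kb] .
  define c where "c n = (YY ^^ (2 * n)) x" for n
  define s where "s k = (norm ((YY ^^ k) x))^2" for k
  have dec: "decseq s" unfolding decseq_def s_def
  proof (intro allI impI)
    fix m n :: nat assume "m \<le> n"
    then show "(norm ((YY ^^ n) x))^2 \<le> (norm ((YY ^^ m) x))^2"
    proof (induction n rule: dec_induct)
      case (step n)
      have "norm ((YY ^^ Suc n) x) \<le> norm ((YY ^^ n) x)" using Yn by simp
      then have "(norm ((YY ^^ Suc n) x))^2 \<le> (norm ((YY ^^ n) x))^2" by (intro power_mono) auto
      then show ?case using step by simp
    qed simp
  qed
  have s0: "\<forall>i. 0 \<le> s i" unfolding s_def by simp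
  obtain Ls where Ls: "s \<longlonglongrightarrow> Ls" "\<forall>i. Ls \<le> s i"
    using decseq_convergent[OF dec s0] by blast
  have cc: "inn (c m) (c n) = s (m + n)" for m n
  proof -
    have "inn (c m) (c n) = inn ((YY ^^ (2 * n + 2 * m)) x) x"
      unfolding c_def using pw_shift[of "2*m" x "2*n" x] by simp
    also have "\<dots> = inn ((YY ^^ (m + n)) ((YY ^^ (m + n)) x)) x"
    proof -
      have "2 * n + 2 * m = (m + n) + (m + n)" by simp
      then show ?thesis by (simp only: funpow_add o_apply)
    qed
    also have "\<dots> = inn ((YY ^^ (m + n)) x) ((YY ^^ (m + n)) x)"
      by (rule pw_sa[OF Y_sa[OF Ab As Kp Kb]])
    finally show ?thesis unfolding s_def by (simp add: inn_self)
  qed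
  have nd: "(norm (c m - c n))^2 = s (2 * m) + s (2 * n) - 2 * s (m + n)" for m n
  proof -
    have "(norm (c m - c n))^2 = inn (c m - c n) (c m - c n)" by (simp add: inn_self)
    also have "\<dots> = inn (c m) (c m) - inn (c m) (c n) - inn (c n) (c m) + inn (c n) (c n)"
      by (simp add: inn_diff)
    also have "\<dots> = s (m + m) - s (m + n) - s (n + m) + s (n + n)" unfolding cc by (rule refl)
    also have "\<dots> = s (2 * m) + s (2 * n) - 2 * s (m + n)" by (simp only: mult_2 add.commute[of n m])
    finally show ?thesis .
  qed
  have cauchy: "Cauchy c"
  proof (rule CauchyI)
    fix e :: real assume e: "0 < e"
    have e4: "0 < e^2 / 4" using e by simp
    from LIMSEQ_D[OF Ls(1) e4] obtain N where N0: "\<forall>k\<ge>N. norm (s k - Ls) < e^2 / 4" ..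
    have N: "norm (s k - Ls) < e^2 / 4" if "k \<ge> N" for k using N0 that by simp
    show "\<exists>M. \<forall>m\<ge>M. \<forall>n\<ge>M. norm (c m - c n) < e"
    proof (intro exI[of _ N] allI impI)
      fix m n assume mn: "m \<ge> N" "n \<ge> N"
      have "norm (s (2 * m) - Ls) < e^2 / 4" using N[of "2 * m"] mn by simp
      then have a1: "s (2 * m) - Ls < e^2 / 4" using abs_ge_self[of "s (2 * m) - Ls"] unfolding real_norm_def by linarith
      have "norm (s (2 * n) - Ls) < e^2 / 4" using N[of "2 * n"] mn by simp
      then have a2: "s (2 * n) - Ls < e^2 / 4" using abs_ge_self[of "s (2 * n) - Ls"] unfolding real_norm_def by linarith
      have a3: "Ls \<le> s (m + n)" using Ls(2) by simp
      have "(norm (c m - c n))^2 < e^2" unfolding nd using a1 a2 a3 e4 by linarith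
      then show "norm (c m - c n) < e" by (rule power_less_imp_less_base) (use e in simp)
    qed
  qed
  then obtain v where v: "c \<longlonglongrightarrow> v" using inn_complete[OF cauchy] convergent_def by blast
  have csuc: "c (Suc n) = YY (YY (c n))" for n
    unfolding c_def by (simp add: funpow_swap1)
  have YYv: "YY (YY v) = v"
  proof (rule LIMSEQ_unique)
    show "(\<lambda>n. c (Suc n)) \<longlonglongrightarrow> v" by (rule LIMSEQ_Suc[OF v])
    have "bounded_linear (\<lambda>z. YY (YY z))" by (rule bounded_linear_compose[OF Yb Yb])
    from bounded_linear.tendsto[OF this v]
    show "(\<lambda>n. c (Suc n)) \<longlonglongrightarrow> YY (YY v)" unfolding csuc .
  qed
  have Av: "A v = 0"
  proof -
    have "norm v \<le> norm (YY v)" using Yn[of "YY v"] YYv by simp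
    then have "(norm v)^2 \<le> (norm (YY v))^2" by (intro power_mono) auto
    also have "\<dots> \<le> (norm v)^2 - (norm (A v))^2 / K^2" by (rule Y_normsq[OF Ab As Kp Kb])
    finally have "(norm (A v))^2 / K^2 \<le> 0" by simp
    then have "(norm (A v))^2 \<le> 0" using Kp by (simp add: divide_le_0_iff)
    then show ?thesis by simp
  qed
  have Rv: "RR v = 0" using R_norm[OF Ab As Kp Kb, of v] Av by simp
  define k where "k = 1 / K^2"
  have uw: "\<exists>w. x - c n = A (A w)" for n
  proof (induction n)
    case 0 then show ?case unfolding c_def by (intro exI[of _ 0]) (simp add: linear_0[OF Al[OF Ab As Kp Kb]])
  next
    case (Suc n)
    then obtain w where w: "x - c n = A (A w)" by blast
    have Yz: "YY z = z - k *\<^sub>R A (A z)" for z unfolding Yop_def k_def by simp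
    have "x - c (Suc n) = (x - c n) + (c n - YY (YY (c n)))" unfolding csuc by simp
    also have "c n - YY (YY (c n)) = A (A ((2 * k) *\<^sub>R c n - (k * k) *\<^sub>R A (A (c n))))"
    proof -
      have h2: "(k * 2) *\<^sub>R a = k *\<^sub>R a + k *\<^sub>R a" for a :: 'v
        using scaleR_left_distrib[of k k a] by (simp add: mult_2_right)
      show ?thesis unfolding Yz using Al[OF Ab As Kp Kb]
        by (simp add: linear_diff linear_scale linear_add algebra_simps scaleR_2 h2)
    qed
    finally have "x - c (Suc n) = A (A (w + ((2 * k) *\<^sub>R c n - (k * k) *\<^sub>R A (A (c n)))))"
      using w Al[OF Ab As Kp Kb] by (simp add: linear_add)
    then show ?case by blast
  qed
  define g where "g z = inn (RR z) z - \<bar>inn (A z) z\<bar>" for z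
  have gpos: "0 \<le> g (x - c n)" for n
  proof -
    obtain w where w: "x - c n = A (A w)" using uw by blast
    then have "x - c n = RR (RR w)" using R_sq[OF Ab As Kp Kb] by simp
    then show ?thesis unfolding g_def using absA_range[of "RR w"] by simp
  qed
  have Rb: "bounded_linear RR" using R_bl[OF Ab As Kp Kb] .
  have ut: "(\<lambda>n. x - c n) \<longlonglongrightarrow> x - v" by (intro tendsto_diff tendsto_const v)
  have gt: "(\<lambda>n. g (x - c n)) \<longlonglongrightarrow> g (x - v)"
    unfolding g_def
    by (intro tendsto_diff tendsto_rabs inn_tendsto ut bounded_linear.tendsto[OF Rb]
        bounded_linear.tendsto[OF Ab])
  have "0 \<le> g (x - v)" by (rule LIMSEQ_le_const[OF gt]) (use gpos in auto)
  moreover have "g (x - v) = g x"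
  proof -
    have Rl: "linear RR" using R_lin[OF Ab As Kp Kb] .
    have "inn (RR (x - v)) (x - v) = inn (RR x) x"
    proof -
      have "inn (RR (x - v)) (x - v) = inn (RR x) x - inn (RR x) v"
        using linear_diff[OF Rl, of x v] Rv by (simp add: inn_diff)
      also have "inn (RR x) v = inn x (RR v)" by (rule R_sa[OF Ab As Kp Kb])
      finally show ?thesis using Rv by simp
    qed
    moreover have "inn (A (x - v)) (x - v) = inn (A x) x"
    proof -
      have "inn (A (x - v)) (x - v) = inn (A x) x - inn (A x) v"
        using linear_diff[OF Al[OF Ab As Kp Kb], of x v] Av by (simp add: inn_diff)
      also have "inn (A x) v = inn x (A v)" by (rule As)
      finally show ?thesis using Av by simp
    qed
    ultimately show ?thesis unfolding g_def by simp
  qed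
  ultimately show ?thesis unfolding g_def by simp
qed

end

lemma decomp:
  assumes Ab: "bounded_linear A" and As: "\<And>x y. inn (A x) y = inn x (A y)"
  shows "\<exists>P Q. bounded_linear P \<and> bounded_linear Q \<and> (\<forall>x y. inn (P x) y = inn x (P y))
    \<and> (\<forall>x y. inn (Q x) y = inn x (Q y)) \<and> (\<forall>x. 0 \<le> inn (P x) x) \<and> (\<forall>x. 0 \<le> inn (Q x) x)
    \<and> (\<forall>x. P x - Q x = A x) \<and> (\<forall>x. norm (P x) \<le> norm (A x)) \<and> (\<forall>x. norm (Q x) \<le> norm (A x))
    \<and> (\<forall>L. bounded_linear L \<and> (\<forall>x. L (A x) = A (L x)) \<longrightarrow> (\<forall>x. L (P x) = P (L x) \<and> L (Q x) = Q (L x)))"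
proof -
  obtain K where Kp: "K > 0" and Kb0: "\<And>x. norm (A x) \<le> norm x * K"
    using bounded_linear.pos_bounded[OF Ab] by blast
  have Kb: "\<And>x. norm (A x) \<le> K * norm x" using Kb0 by (simp add: mult.commute)
  note F = Ab As Kp Kb
  define R where "R = Rt A K"
  define P where "P = (\<lambda>x. (1/2) *\<^sub>R (R x + A x))"
  define Q where "Q = (\<lambda>x. (1/2) *\<^sub>R (R x - A x))"
  have Rb: "bounded_linear R" unfolding R_def by (rule R_bl[OF F])
  have Rs: "\<And>x y. inn (R x) y = inn x (R y)" unfolding R_def by (rule R_sa[OF F])
  have ab: "\<And>x. \<bar>inn (A x) x\<bar> \<le> inn (R x) x" unfolding R_def by (rule absA[OF F])
  have Rn: "\<And>x. norm (R x) = norm (A x)" unfolding R_def by (rule R_norm[OF F])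
  have Rc: "\<And>L x. bounded_linear L \<Longrightarrow> (\<forall>x. L (A x) = A (L x)) \<Longrightarrow> L (R x) = R (L x)"
    unfolding R_def using R_comm[OF F] by blast
  have h1: "bounded_linear P" unfolding P_def
    by (intro bounded_linear_compose[OF bounded_linear_scaleR_right] bounded_linear_add Rb Ab)
  have h2: "bounded_linear Q" unfolding Q_def
    by (intro bounded_linear_compose[OF bounded_linear_scaleR_right] bounded_linear_sub Rb Ab)
  have h3: "\<forall>x y. inn (P x) y = inn x (P y)" unfolding P_def using Rs As
    by (simp add: inn_scale inn_scale2 inn_add inn_add2)
  have h4: "\<forall>x y. inn (Q x) y = inn x (Q y)" unfolding Q_def using Rs As
    by (simp add: inn_scale inn_scale2 inn_diff)
  have h5: "\<forall>x. 0 \<le> inn (P x) x"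
  proof
    fix x show "0 \<le> inn (P x) x" unfolding P_def using ab[of x] by (simp add: inn_scale inn_add)
  qed
  have h6: "\<forall>x. 0 \<le> inn (Q x) x"
  proof
    fix x show "0 \<le> inn (Q x) x" unfolding Q_def using ab[of x] by (simp add: inn_scale inn_diff)
  qed
  have h7: "\<forall>x. P x - Q x = A x"
  proof
    fix x
    have "P x - Q x = (1/2) *\<^sub>R (A x + A x)" unfolding P_def Q_def by (simp add: algebra_simps)
    also have "\<dots> = A x" by (simp add: scaleR_2[symmetric])
    finally show "P x - Q x = A x" .
  qed
  have h8: "\<forall>x. norm (P x) \<le> norm (A x)"
  proof
    fix x
    have "norm (P x) \<le> (1/2) * (norm (R x) + norm (A x))" unfolding P_def
      by (simp add: norm_triangle_ineq)
    then show "norm (P x) \<le> norm (A x)" using Rn[of x] by simp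
  qed
  have h9: "\<forall>x. norm (Q x) \<le> norm (A x)"
  proof
    fix x
    have "norm (Q x) \<le> (1/2) * (norm (R x) + norm (A x))" unfolding Q_def
      by (simp add: norm_triangle_ineq4)
    then show "norm (Q x) \<le> norm (A x)" using Rn[of x] by simp
  qed
  have h10: "\<forall>L. bounded_linear L \<and> (\<forall>x. L (A x) = A (L x)) \<longrightarrow> (\<forall>x. L (P x) = P (L x) \<and> L (Q x) = Q (L x))"
  proof (intro allI impI)
    fix L x assume L: "bounded_linear L \<and> (\<forall>x. L (A x) = A (L x))"
    have l: "linear L" using L bounded_linear.linear by blast
    have "L (R x) = R (L x)" using Rc L by blast
    then show "L (P x) = P (L x) \<and> L (Q x) = Q (L x)" unfolding P_def Q_def using L
      by (simp add: linear_add[OF l] linear_diff[OF l] linear_scale[OF l])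
  qed
  show ?thesis using h1 h2 h3 h4 h5 h6 h7 h8 h9 h10
    by (intro exI[of _ P] exI[of _ Q] conjI) assumption+
qed
end



context hil begin

lemma sum_diff_sq:
  assumes T: "(\<lambda>b. (norm (T b))^2) summable_on B" and S: "(\<lambda>b. (norm (S b))^2) summable_on B"
  shows "(\<lambda>b. (norm (T b - S b))^2) summable_on B"
proof (rule summable_on_comparison_test)
  show "(\<lambda>b. 2 * (norm (T b))^2 + 2 * (norm (S b))^2) summable_on B"
    by (intro summable_on_add summable_on_cmult_right T S)
  fix b
  have "norm (T b - S b) \<le> norm (T b) + norm (S b)" by (rule norm_triangle_ineq4)
  then have "(norm (T b - S b))^2 \<le> (norm (T b) + norm (S b))^2" by (rule power_mono) auto
  also have "\<dots> \<le> 2 * (norm (T b))^2 + 2 * (norm (S b))^2"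
  proof -
    have "0 \<le> (norm (T b) - norm (S b))^2" by simp
    then show ?thesis unfolding power2_sum power2_diff by linarith
  qed
  finally show "(norm (T b - S b))^2 \<le> 2 * (norm (T b))^2 + 2 * (norm (S b))^2" .
qed simp

lemma sum_le_sq:
  assumes A: "(\<lambda>b. (norm (A b))^2) summable_on B" and le: "\<And>x. norm (P x) \<le> norm (A x)"
  shows "(\<lambda>b. (norm (P b))^2) summable_on B"
proof (rule summable_on_comparison_test[OF A])
  fix b show "(norm (P b))^2 \<le> (norm (A b))^2" using le[of b] by (rule power_mono) auto
qed simp

end




lemma real_hil: "hil (inner :: 'a::{real_inner,complete_space} \<Rightarrow> 'a \<Rightarrow> real)"
  by unfold_locales (auto simp: inner_add_left inner_add_right inner_commute power2_norm_eq_inner Cauchy_convergent)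

lemma real_case:
  fixes x :: "nat \<Rightarrow> 'a::{real_inner, complete_space}"
  shows
   "((\<forall>T S. r_hilbert_schmidt T \<and> r_positive T \<and> r_selfadjoint T \<and>
             r_hilbert_schmidt S \<and> r_positive S \<and> r_selfadjoint S \<and>
             (\<forall>k. T (x k) \<bullet> x k = S (x k) \<bullet> x k) \<longrightarrow> T = S)
      \<longleftrightarrow>
      (\<forall>T S. r_hilbert_schmidt T \<and> r_selfadjoint T \<and>
             r_hilbert_schmidt S \<and> r_selfadjoint S \<and>
             (\<forall>k. T (x k) \<bullet> x k = S (x k) \<bullet> x k) \<longrightarrow> T = S))
     \<and>
     ((\<forall>T S. r_hilbert_schmidt T \<and> r_selfadjoint T \<and>
             r_hilbert_schmidt S \<and> r_selfadjoint S \<and>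
             (\<forall>k. T (x k) \<bullet> x k = S (x k) \<bullet> x k) \<longrightarrow> T = S)
      \<longleftrightarrow> r_injective_family x)"
    (is "(?C1 \<longleftrightarrow> ?C2) \<and> (_ \<longleftrightarrow> ?C3)")
proof -
  interpret H: hil "inner :: 'a \<Rightarrow> 'a \<Rightarrow> real" by (rule real_hil)
  have onb: "r_orthonormal_basis B \<longleftrightarrow> H.onb B" for B
    unfolding r_orthonormal_basis_def H.onb_def H.orthon_def by (simp add: norm_eq_1)
  have HSd: "r_hilbert_schmidt T \<longleftrightarrow> bounded_linear T \<and> (\<exists>B. H.onb B \<and> (\<lambda>b. (norm (T b))^2) summable_on B)" for T
    unfolding r_hilbert_schmidt_def onb ..
  have diffHS: "r_hilbert_schmidt (\<lambda>v. T v - S v)"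
    if T: "r_hilbert_schmidt T" and S: "r_hilbert_schmidt S" "r_selfadjoint S" for T S :: "'a \<Rightarrow> 'a"
  proof -
    obtain B1 where B1: "H.onb B1" "(\<lambda>b. (norm (T b))^2) summable_on B1" using T HSd by blast
    obtain B2 where B2: "H.onb B2" "(\<lambda>b. (norm (S b))^2) summable_on B2" using S HSd by blast
    have Ss: "\<And>a b. S a \<bullet> b = a \<bullet> S b" using S(2) unfolding r_selfadjoint_def by blast
    have "(\<lambda>b. (norm (S b))^2) summable_on B1" by (rule H.hs_indep[OF B1(1) B2(1) Ss B2(2)])
    then have "(\<lambda>b. (norm (T b - S b))^2) summable_on B1" using H.sum_diff_sq B1(2) by blast
    moreover have "bounded_linear (\<lambda>v. T v - S v)"
      using T S HSd r_selfadjoint_def bounded_linear_sub by blast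
    ultimately show ?thesis using HSd B1(1) by blast
  qed
  have diffSA: "r_selfadjoint (\<lambda>v. T v - S v)"
    if "r_selfadjoint T" "r_selfadjoint S" for T S :: "'a \<Rightarrow> 'a"
    using that unfolding r_selfadjoint_def by (simp add: bounded_linear_sub inner_diff_left inner_diff_right)
  have twoHS: "r_hilbert_schmidt (\<lambda>v. 2 *\<^sub>R T v)" if T: "r_hilbert_schmidt T" for T :: "'a \<Rightarrow> 'a"
  proof -
    obtain B where B: "H.onb B" "(\<lambda>b. (norm (T b))^2) summable_on B" using T HSd by blast
    have "(\<lambda>b. 4 * (norm (T b))^2) summable_on B" by (rule summable_on_cmult_right[OF B(2)])
    then have "(\<lambda>b. (norm (2 *\<^sub>R T b))^2) summable_on B" by (simp add: power_mult_distrib)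
    moreover have "bounded_linear (\<lambda>v. 2 *\<^sub>R T v)"
      using T HSd bounded_linear_compose[OF bounded_linear_scaleR_right] by blast
    ultimately show ?thesis using HSd B(1) by blast
  qed
  have twoSA: "r_selfadjoint (\<lambda>v. 2 *\<^sub>R T v)" if T: "r_selfadjoint T" for T :: "'a \<Rightarrow> 'a"
    using T unfolding r_selfadjoint_def
    by (simp add: bounded_linear_compose[OF bounded_linear_scaleR_right])
  have dec: "\<exists>P Q. r_hilbert_schmidt P \<and> r_positive P \<and> r_selfadjoint P \<and>
       r_hilbert_schmidt Q \<and> r_positive Q \<and> r_selfadjoint Q \<and> (\<forall>v. P v - Q v = A v)"
    if A1: "r_hilbert_schmidt A" and A2: "r_selfadjoint A" for A :: "'a \<Rightarrow> 'a"
  proof -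
    obtain B where B: "H.onb B" "(\<lambda>b. (norm (A b))^2) summable_on B" using A1 HSd by blast
    have Ab: "bounded_linear A" and As: "\<And>a b. A a \<bullet> b = a \<bullet> A b"
      using A2 unfolding r_selfadjoint_def by blast+
    from H.decomp[OF Ab As] obtain P Q where
      Pb: "bounded_linear P" and Qb: "bounded_linear Q"
      and Ps: "\<forall>x y. P x \<bullet> y = x \<bullet> P y" and Qs: "\<forall>x y. Q x \<bullet> y = x \<bullet> Q y"
      and Pp: "\<forall>x. 0 \<le> P x \<bullet> x" and Qp: "\<forall>x. 0 \<le> Q x \<bullet> x"
      and PQ: "\<forall>x. P x - Q x = A x"
      and Pn: "\<forall>x. norm (P x) \<le> norm (A x)" and Qn: "\<forall>x. norm (Q x) \<le> norm (A x)"
      by blast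
    have "r_hilbert_schmidt P"
      using HSd Pb B(1) H.sum_le_sq[OF B(2), of P] Pn by blast
    moreover have "r_hilbert_schmidt Q"
      using HSd Qb B(1) H.sum_le_sq[OF B(2), of Q] Qn by blast
    moreover have "r_positive P" "r_positive Q" unfolding r_positive_def using Pp Qp by blast+
    moreover have "r_selfadjoint P" "r_selfadjoint Q" unfolding r_selfadjoint_def using Pb Qb Ps Qs by blast+
    ultimately show ?thesis using PQ by blast
  qed
  have c12: ?C2 if C1: ?C1
  proof (intro allI impI)
    fix T S :: "'a \<Rightarrow> 'a"
    assume h: "r_hilbert_schmidt T \<and> r_selfadjoint T \<and> r_hilbert_schmidt S \<and> r_selfadjoint S \<and>
             (\<forall>k. T (x k) \<bullet> x k = S (x k) \<bullet> x k)"
    define A where "A = (\<lambda>v. T v - S v)"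
    have AH: "r_hilbert_schmidt A" unfolding A_def using diffHS h by blast
    have AS: "r_selfadjoint A" unfolding A_def using diffSA h by blast
    obtain P Q where PQ: "r_hilbert_schmidt P \<and> r_positive P \<and> r_selfadjoint P \<and>
       r_hilbert_schmidt Q \<and> r_positive Q \<and> r_selfadjoint Q \<and> (\<forall>v. P v - Q v = A v)"
      using dec[OF AH AS] by blast
    have "P (x k) \<bullet> x k = Q (x k) \<bullet> x k" for k
    proof -
      have "P (x k) \<bullet> x k - Q (x k) \<bullet> x k = A (x k) \<bullet> x k"
        using PQ by (simp add: inner_diff_left[symmetric])
      also have "\<dots> = 0" unfolding A_def using h by (simp add: inner_diff_left)
      finally show ?thesis by simp
    qed
    then have "P = Q" using C1 PQ by blast
    then have "A v = 0" for v using PQ by (metis diff_self)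
    then show "T = S" unfolding A_def by (simp add: fun_eq_iff)
  qed
  have c21: ?C1 if C2: ?C2 using C2 by blast
  have c23: ?C3 if C2: ?C2
    unfolding r_injective_family_def
  proof (intro allI impI)
    fix T :: "'a \<Rightarrow> 'a"
    assume h: "r_hilbert_schmidt T \<and> r_selfadjoint T \<and> (\<forall>k. T (x k) \<bullet> x k = 0)"
    have "(\<forall>k. T (x k) \<bullet> x k = (2 *\<^sub>R T (x k)) \<bullet> x k)" using h by simp
    then have "T = (\<lambda>v. 2 *\<^sub>R T v)" using C2 h twoHS twoSA by blast
    then have "T v = 0" for v by (metis (no_types) scaleR_2 add_cancel_right_right)
    then show "T = (\<lambda>_. 0)" by (simp add: fun_eq_iff)
  qed
  have c32: ?C2 if C3: ?C3
  proof (intro allI impI)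
    fix T S :: "'a \<Rightarrow> 'a"
    assume h: "r_hilbert_schmidt T \<and> r_selfadjoint T \<and> r_hilbert_schmidt S \<and> r_selfadjoint S \<and>
             (\<forall>k. T (x k) \<bullet> x k = S (x k) \<bullet> x k)"
    have AH: "r_hilbert_schmidt (\<lambda>v. T v - S v)" using diffHS h by blast
    have AS: "r_selfadjoint (\<lambda>v. T v - S v)" using diffSA h by blast
    have "\<forall>k. (T (x k) - S (x k)) \<bullet> x k = 0" using h by (simp add: inner_diff_left)
    then have "(\<lambda>v. T v - S v) = (\<lambda>_. 0)" using C3 AH AS unfolding r_injective_family_def by blast
    then show "T = S" by (simp add: fun_eq_iff)
  qed
  show ?thesis using c12 c21 c23 c32 by blast
qed




context
  fixes sc :: "complex \<Rightarrow> 'b::banach \<Rightarrow> 'b" and ip :: "'b \<Rightarrow> 'b \<Rightarrow> complex"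
  assumes CH: "complex_hilbert sc ip"
begin

lemma sc_real: "sc (complex_of_real r) x = r *\<^sub>R x" using CH unfolding complex_hilbert_def by blast
lemma sc_mult: "sc (a * b) x = sc a (sc b x)" using CH unfolding complex_hilbert_def by blast
lemma sc_add: "sc a (x + y) = sc a x + sc a y" using CH unfolding complex_hilbert_def by blast
lemma ip_add: "ip (x + y) z = ip x z + ip y z" using CH unfolding complex_hilbert_def by blast
lemma ip_sc: "ip (sc a x) y = a * ip x y" using CH unfolding complex_hilbert_def by blast
lemma ip_cnj: "ip y x = cnj (ip x y)" using CH unfolding complex_hilbert_def by blast
lemma ip_self: "ip x x = complex_of_real ((norm x)^2)" using CH unfolding complex_hilbert_def by blast

lemma sc_one: "sc 1 x = x" using sc_real[of 1 x] by simp

lemma ip_scaleR: "ip (r *\<^sub>R x) y = r * ip x y"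
  using ip_sc[of "complex_of_real r" x y] sc_real[of r x] by simp

lemma ip_add2: "ip x (y + z) = ip x y + ip x z"
  using ip_cnj[of x "y + z"] ip_add[of y z x] ip_cnj[of x y] ip_cnj[of x z] by simp

lemma ip_sc2: "ip x (sc a y) = cnj a * ip x y"
  using ip_cnj[of x "sc a y"] ip_sc[of a y x] ip_cnj[of x y] by simp

lemma ip_minus: "ip (- x) y = - ip x y"
  using ip_scaleR[of "-1" x y] by simp

lemma ip_diff: "ip (x - y) z = ip x z - ip y z"
  using ip_add[of x "- y" z] ip_minus[of y z] by simp

lemma re_hil: "hil (\<lambda>x y. Re (ip x y))"
proof
  show "Re (ip (x + y) z) = Re (ip x z) + Re (ip y z)" for x y z by (simp add: ip_add)
  show "Re (ip (r *\<^sub>R x) y) = r * Re (ip x y)" for r x y by (simp add: ip_scaleR)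
  show "Re (ip x y) = Re (ip y x)" for x y using ip_cnj[of x y] by simp
  show "Re (ip x x) = (norm x)^2" for x by (simp add: ip_self)
  show "Cauchy X \<Longrightarrow> convergent X" for X :: "nat \<Rightarrow> 'b" by (rule Cauchy_convergent)
qed

lemma sc_norm: "norm (sc a x) = cmod a * norm x"
proof -
  have "ip (sc a x) (sc a x) = a * (cnj a * ip x x)" by (simp add: ip_sc ip_sc2)
  also have "\<dots> = (a * cnj a) * ip x x" by (simp add: mult.assoc)
  also have "a * cnj a = complex_of_real ((cmod a)^2)" by (rule complex_norm_square[symmetric])
  also have "complex_of_real ((cmod a)^2) * ip x x = complex_of_real ((cmod a * norm x)^2)"
    by (simp add: ip_self power_mult_distrib)
  finally have e: "ip (sc a x) (sc a x) = complex_of_real ((cmod a * norm x)^2)" .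
  have "(norm (sc a x))^2 = (cmod a * norm x)^2"
    using e unfolding ip_self of_real_eq_iff .
  then show ?thesis by (simp add: power2_eq_iff_nonneg)
qed

lemma sc_bl: "bounded_linear (sc a)"
proof (rule bounded_linear_intro[where K="cmod a"])
  show "sc a (x + y) = sc a x + sc a y" for x y by (rule sc_add)
  show "sc a (r *\<^sub>R x) = r *\<^sub>R sc a x" for r x
  proof -
    have "sc a (r *\<^sub>R x) = sc a (sc (complex_of_real r) x)" by (simp add: sc_real)
    also have "\<dots> = sc (complex_of_real r) (sc a x)" by (simp add: sc_mult[symmetric] mult.commute)
    finally show ?thesis by (simp add: sc_real)
  qed
  show "norm (sc a x) \<le> norm x * cmod a" for x by (simp add: sc_norm mult.commute)
qed

lemma csa_re: "c_selfadjoint sc ip T \<Longrightarrow> Re (ip (T x) y) = Re (ip x (T y))"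
  unfolding c_selfadjoint_def by simp

lemma re_csa:
  assumes L: "c_linear sc T" and R: "\<And>x y. Re (ip (T x) y) = Re (ip x (T y))"
  shows "c_selfadjoint sc ip T"
  unfolding c_selfadjoint_def
proof (intro conjI allI L)
  fix x y
  have Tc: "T (sc \<i> y) = sc \<i> (T y)" using L unfolding c_linear_def by blast
  have imf: "Im (ip u v) = Re (ip u (sc \<i> v))" for u v by (simp add: ip_sc2)
  show "ip (T x) y = ip x (T y)"
  proof (rule complex_eqI)
    show "Re (ip (T x) y) = Re (ip x (T y))" by (rule R)
    have "Im (ip (T x) y) = Re (ip (T x) (sc \<i> y))" by (rule imf)
    also have "\<dots> = Re (ip x (T (sc \<i> y)))" by (rule R)
    also have "\<dots> = Im (ip x (T y))" unfolding Tc imf ..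
    finally show "Im (ip (T x) y) = Im (ip x (T y))" .
  qed
qed

lemma cpos:
  assumes S: "c_selfadjoint sc ip T"
  shows "c_positive ip T \<longleftrightarrow> (\<forall>x. 0 \<le> Re (ip (T x) x))"
proof
  assume "c_positive ip T"
  show "\<forall>x. 0 \<le> Re (ip (T x) x)"
  proof
    fix x
    obtain r where "r \<ge> 0" "ip (T x) x = complex_of_real r"
      using \<open>c_positive ip T\<close> unfolding c_positive_def by blast
    then show "0 \<le> Re (ip (T x) x)" by simp
  qed
next
  assume P: "\<forall>x. 0 \<le> Re (ip (T x) x)"
  show "c_positive ip T" unfolding c_positive_def
  proof
    fix x
    have "ip (T x) x = ip x (T x)" using S unfolding c_selfadjoint_def by blast
    also have "\<dots> = cnj (ip (T x) x)" by (rule ip_cnj)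
    finally have "Im (ip (T x) x) = 0" by (metis cnj.simps(2) complex_cnj_cancel_iff neg_equal_zero)
    then have "ip (T x) x = complex_of_real (Re (ip (T x) x))" by (simp add: complex_eq_iff)
    then show "\<exists>r\<ge>0. ip (T x) x = complex_of_real r" using P by blast
  qed
qed

end



context
  fixes sc :: "complex \<Rightarrow> 'b::banach \<Rightarrow> 'b" and ip :: "'b \<Rightarrow> 'b \<Rightarrow> complex"
  assumes CH: "complex_hilbert sc ip"
begin

lemma sc_addl: "sc (a + b) x = sc a x + sc b x" using CH unfolding complex_hilbert_def by blast

lemma sc_decomp: "sc z b = Re z *\<^sub>R b + Im z *\<^sub>R sc \<i> b"
proof -
  have "z = complex_of_real (Re z) + complex_of_real (Im z) * \<i>" by (simp add: complex_eq_iff)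
  then have "sc z b = sc (complex_of_real (Re z) + complex_of_real (Im z) * \<i>) b"
    by (rule arg_cong[where f="\<lambda>z. sc z b"])
  also have "\<dots> = sc (complex_of_real (Re z)) b + sc (complex_of_real (Im z)) (sc \<i> b)"
    unfolding sc_addl sc_mult[OF CH] ..
  finally have "sc z b = sc (complex_of_real (Re z)) b + sc (complex_of_real (Im z)) (sc \<i> b)" .
  then show ?thesis by (simp add: sc_real[OF CH])
qed

lemma sc_inj: "inj_on (sc \<i>) A"
proof (rule inj_onI)
  fix u v assume "sc \<i> u = sc \<i> v"
  then have "sc (- \<i>) (sc \<i> u) = sc (- \<i>) (sc \<i> v)" by simp
  then show "u = v" by (simp add: sc_mult[OF CH, symmetric] sc_one[OF CH])
qed

lemma conb:
  assumes B: "c_orthonormal_basis sc ip B"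
  shows "hil.onb (\<lambda>x y. Re (ip x y)) (B \<union> sc \<i> ` B)"
proof -
  interpret H: hil "\<lambda>x y. Re (ip x y)" by (rule re_hil[OF CH])
  have bb: "\<And>b. b \<in> B \<Longrightarrow> ip b b = 1" using B by (simp add: c_orthonormal_basis_def)
  have bc: "\<And>b c. b \<in> B \<Longrightarrow> c \<in> B \<Longrightarrow> b \<noteq> c \<Longrightarrow> ip b c = 0"
    using B by (simp add: c_orthonormal_basis_def)
  have cl: "closure (cspan sc B) = UNIV" using B by (simp add: c_orthonormal_basis_def)
  have ii: "ip (sc \<i> u) (sc \<i> w) = ip u w" for u w by (simp add: ip_sc[OF CH] ip_sc2[OF CH])
  have cross: "Re (ip b (sc \<i> c)) = 0" if "b \<in> B" "c \<in> B" for b c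
  proof (cases "b = c")
    case True then show ?thesis using bb[OF that(1)] by (simp add: ip_sc2[OF CH])
  next
    case False then show ?thesis using bc[OF that False] by (simp add: ip_sc2[OF CH])
  qed
  have cross2: "Re (ip (sc \<i> b) c) = 0" if "b \<in> B" "c \<in> B" for b c
    using cross[OF that(2) that(1)] ip_cnj[OF CH, of c "sc \<i> b"] by simp
  have orth: "H.orthon (B \<union> sc \<i> ` B)"
    unfolding H.orthon_def
  proof (intro conjI ballI impI)
    fix u assume "u \<in> B \<union> sc \<i> ` B"
    then show "Re (ip u u) = 1" using bb ii by auto
  next
    fix u w assume u: "u \<in> B \<union> sc \<i> ` B" and w: "w \<in> B \<union> sc \<i> ` B" and uw: "u \<noteq> w"
    show "Re (ip u w) = 0"
    proof (cases "u \<in> B")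
      case uB: True
      show ?thesis
      proof (cases "w \<in> B")
        case True then show ?thesis using bc uB uw by simp
      next
        case False
        then obtain c where "c \<in> B" "w = sc \<i> c" using w by blast
        then show ?thesis using cross uB by simp
      qed
    next
      case False
      then obtain b where b: "b \<in> B" "u = sc \<i> b" using u by blast
      show ?thesis
      proof (cases "w \<in> B")
        case True then show ?thesis using cross2 b by simp
      next
        case False
        then obtain c where c: "c \<in> B" "w = sc \<i> c" using w by blast
        then have "b \<noteq> c" using b uw by blast
        then show ?thesis using b c ii bc by simp
      qed
    qed
  qed
  have "cspan sc B \<subseteq> span (B \<union> sc \<i> ` B)"
  proof
    fix v assume "v \<in> cspan sc B"
    then obtain F c where F: "finite F" "F \<subseteq> B" "v = (\<Sum>b\<in>F. sc (c b) b)"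
      unfolding cspan_def by blast
    have "sc (c b) b \<in> span (B \<union> sc \<i> ` B)" if "b \<in> F" for b
    proof -
      have "b \<in> span (B \<union> sc \<i> ` B)" using that F(2) by (intro span_base) blast
      moreover have "sc \<i> b \<in> span (B \<union> sc \<i> ` B)" using that F(2) by (intro span_base) blast
      ultimately show ?thesis by (subst sc_decomp) (intro span_add span_scale)
    qed
    then show "v \<in> span (B \<union> sc \<i> ` B)" unfolding F(3) by (rule span_sum)
  qed
  then have "closure (cspan sc B) \<subseteq> closure (span (B \<union> sc \<i> ` B))" by (rule closure_mono)
  then have "closure (span (B \<union> sc \<i> ` B)) = UNIV" using cl by blast
  then show ?thesis using orth unfolding H.onb_def by blast
qed

lemma c_sum_ext:
  assumes L: "c_linear sc T" and sm: "(\<lambda>b. (norm (T b))^2) summable_on B"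
  shows "(\<lambda>b. (norm (T b))^2) summable_on (B \<union> sc \<i> ` B)"
proof (rule summable_on_union[OF sm])
  have "norm (T (sc \<i> b)) = norm (T b)" for b
    using L unfolding c_linear_def by (simp add: sc_norm[OF CH])
  then have "((\<lambda>b. (norm (T b))^2) \<circ> sc \<i>) summable_on B" using sm by (simp add: o_def)
  then show "(\<lambda>b. (norm (T b))^2) summable_on (sc \<i> ` B)" by (simp add: summable_on_reindex[OF sc_inj])
qed

end



context
  fixes sc :: "complex \<Rightarrow> 'b::banach \<Rightarrow> 'b" and ip :: "'b \<Rightarrow> 'b \<Rightarrow> complex"
  assumes CH: "complex_hilbert sc ip"
begin

lemma complex_case:
  fixes y :: "nat \<Rightarrow> 'b"
  shows
     "((\<forall>T S. c_hilbert_schmidt sc ip T \<and> c_positive ip T \<and> c_selfadjoint sc ip T \<and>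
             c_hilbert_schmidt sc ip S \<and> c_positive ip S \<and> c_selfadjoint sc ip S \<and>
             (\<forall>k. ip (T (y k)) (y k) = ip (S (y k)) (y k)) \<longrightarrow> T = S)
      \<longleftrightarrow>
      (\<forall>T S. c_hilbert_schmidt sc ip T \<and> c_selfadjoint sc ip T \<and>
             c_hilbert_schmidt sc ip S \<and> c_selfadjoint sc ip S \<and>
             (\<forall>k. ip (T (y k)) (y k) = ip (S (y k)) (y k)) \<longrightarrow> T = S))
     \<and>
     ((\<forall>T S. c_hilbert_schmidt sc ip T \<and> c_selfadjoint sc ip T \<and>
             c_hilbert_schmidt sc ip S \<and> c_selfadjoint sc ip S \<and>
             (\<forall>k. ip (T (y k)) (y k) = ip (S (y k)) (y k)) \<longrightarrow> T = S)
      \<longleftrightarrow> c_injective_family sc ip y)"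
    (is "(?C1 \<longleftrightarrow> ?C2) \<and> (_ \<longleftrightarrow> ?C3)")
proof -
  interpret H: hil "\<lambda>x y. Re (ip x y)" by (rule re_hil[OF CH])
  have scl: "linear (sc a)" for a using sc_bl[OF CH] bounded_linear.linear by blast
  have cl_diff: "c_linear sc (\<lambda>v. T v - S v)" if "c_linear sc T" "c_linear sc S" for T S :: "'b \<Rightarrow> 'b"
    using that unfolding c_linear_def by (simp add: bounded_linear_sub linear_diff[OF scl])
  have cl_two: "c_linear sc (\<lambda>v. 2 *\<^sub>R T v)" if "c_linear sc T" for T :: "'b \<Rightarrow> 'b"
    using that unfolding c_linear_def
    by (simp add: bounded_linear_compose[OF bounded_linear_scaleR_right] linear_scale[OF scl])
  have diffHS: "c_hilbert_schmidt sc ip (\<lambda>v. T v - S v)"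
    if T: "c_hilbert_schmidt sc ip T" and S: "c_hilbert_schmidt sc ip S" "c_selfadjoint sc ip S"
    for T S :: "'b \<Rightarrow> 'b"
  proof -
    obtain B1 where B1: "c_orthonormal_basis sc ip B1" "(\<lambda>b. (norm (T b))^2) summable_on B1"
      using T unfolding c_hilbert_schmidt_def by blast
    obtain B2 where B2: "c_orthonormal_basis sc ip B2" "(\<lambda>b. (norm (S b))^2) summable_on B2"
      using S unfolding c_hilbert_schmidt_def by blast
    have TL: "c_linear sc T" and SL: "c_linear sc S" using T S unfolding c_hilbert_schmidt_def by blast+
    have Ss: "\<And>a b. Re (ip (S a) b) = Re (ip a (S b))" using csa_re[OF CH S(2)] .
    have "(\<lambda>b. (norm (S b))^2) summable_on (B1 \<union> sc \<i> ` B1)"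
      by (rule H.hs_indep[OF conb[OF CH B1(1)] conb[OF CH B2(1)] Ss c_sum_ext[OF CH SL B2(2)]])
    then have "(\<lambda>b. (norm (S b))^2) summable_on B1" by (rule summable_on_subset) blast
    then have "(\<lambda>b. (norm (T b - S b))^2) summable_on B1" using H.sum_diff_sq B1(2) by blast
    then show ?thesis unfolding c_hilbert_schmidt_def using B1(1) cl_diff[OF TL SL] by blast
  qed
  have diffSA: "c_selfadjoint sc ip (\<lambda>v. T v - S v)"
    if T: "c_selfadjoint sc ip T" and S: "c_selfadjoint sc ip S" for T S :: "'b \<Rightarrow> 'b"
  proof (rule re_csa[OF CH])
    show "c_linear sc (\<lambda>v. T v - S v)" using T S cl_diff unfolding c_selfadjoint_def by blast
    fix a b
    show "Re (ip (T a - S a) b) = Re (ip a (T b - S b))"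
      using csa_re[OF CH T, of a b] csa_re[OF CH S, of a b] by (simp add: H.inn_diff)
  qed
  have twoHS: "c_hilbert_schmidt sc ip (\<lambda>v. 2 *\<^sub>R T v)" if T: "c_hilbert_schmidt sc ip T" for T :: "'b \<Rightarrow> 'b"
  proof -
    obtain B where B: "c_orthonormal_basis sc ip B" "(\<lambda>b. (norm (T b))^2) summable_on B"
      using T unfolding c_hilbert_schmidt_def by blast
    have TL: "c_linear sc T" using T unfolding c_hilbert_schmidt_def by blast
    have "(\<lambda>b. 4 * (norm (T b))^2) summable_on B" by (rule summable_on_cmult_right[OF B(2)])
    then have "(\<lambda>b. (norm (2 *\<^sub>R T b))^2) summable_on B" by (simp add: power_mult_distrib)
    then show ?thesis unfolding c_hilbert_schmidt_def using B(1) cl_two[OF TL] by blast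
  qed
  have twoSA: "c_selfadjoint sc ip (\<lambda>v. 2 *\<^sub>R T v)" if T: "c_selfadjoint sc ip T" for T :: "'b \<Rightarrow> 'b"
  proof (rule re_csa[OF CH])
    show "c_linear sc (\<lambda>v. 2 *\<^sub>R T v)" using T cl_two unfolding c_selfadjoint_def by blast
    fix a b
    show "Re (ip (2 *\<^sub>R T a) b) = Re (ip a (2 *\<^sub>R T b))"
      using csa_re[OF CH T, of a b] by (simp add: H.inn_scale H.inn_scale2)
  qed
  have dec: "\<exists>P Q. c_hilbert_schmidt sc ip P \<and> c_positive ip P \<and> c_selfadjoint sc ip P \<and>
       c_hilbert_schmidt sc ip Q \<and> c_positive ip Q \<and> c_selfadjoint sc ip Q \<and> (\<forall>v. P v - Q v = A v)"
    if A1: "c_hilbert_schmidt sc ip A" and A2: "c_selfadjoint sc ip A" for A :: "'b \<Rightarrow> 'b"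
  proof -
    obtain B where B: "c_orthonormal_basis sc ip B" "(\<lambda>b. (norm (A b))^2) summable_on B"
      using A1 unfolding c_hilbert_schmidt_def by blast
    have Ab: "bounded_linear A" and Ac: "\<And>a v. A (sc a v) = sc a (A v)"
      using A2 unfolding c_selfadjoint_def c_linear_def by blast+
    have As: "\<And>a b. Re (ip (A a) b) = Re (ip a (A b))" using csa_re[OF CH A2] .
    from H.decomp[OF Ab As] obtain P Q where
      Pb: "bounded_linear P" and Qb: "bounded_linear Q"
      and Ps: "\<forall>x y. Re (ip (P x) y) = Re (ip x (P y))" and Qs: "\<forall>x y. Re (ip (Q x) y) = Re (ip x (Q y))"
      and Pp: "\<forall>x. 0 \<le> Re (ip (P x) x)" and Qp: "\<forall>x. 0 \<le> Re (ip (Q x) x)"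
      and PQ: "\<forall>x. P x - Q x = A x"
      and Pn: "\<forall>x. norm (P x) \<le> norm (A x)" and Qn: "\<forall>x. norm (Q x) \<le> norm (A x)"
      and Com: "\<forall>L. bounded_linear L \<and> (\<forall>x. L (A x) = A (L x)) \<longrightarrow> (\<forall>x. L (P x) = P (L x) \<and> L (Q x) = Q (L x))"
      by blast
    have cc: "sc a (P v) = P (sc a v) \<and> sc a (Q v) = Q (sc a v)" for a v
    proof -
      have "bounded_linear (sc a) \<and> (\<forall>x. sc a (A x) = A (sc a x))" using sc_bl[OF CH] Ac by simp
      then show ?thesis using Com by blast
    qed
    have PL: "c_linear sc P" unfolding c_linear_def using Pb cc by simp
    have QL: "c_linear sc Q" unfolding c_linear_def using Qb cc by simp
    have PS: "c_selfadjoint sc ip P" using re_csa[OF CH PL] Ps by blast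
    have QS: "c_selfadjoint sc ip Q" using re_csa[OF CH QL] Qs by blast
    have "c_positive ip P" using cpos[OF CH PS] Pp by blast
    moreover have "c_positive ip Q" using cpos[OF CH QS] Qp by blast
    moreover have "c_hilbert_schmidt sc ip P" unfolding c_hilbert_schmidt_def
      using PL B(1) H.sum_le_sq[OF B(2), of P] Pn by blast
    moreover have "c_hilbert_schmidt sc ip Q" unfolding c_hilbert_schmidt_def
      using QL B(1) H.sum_le_sq[OF B(2), of Q] Qn by blast
    ultimately show ?thesis using PS QS PQ by blast
  qed
  have c12: ?C2 if C1: ?C1
  proof (intro allI impI)
    fix T S :: "'b \<Rightarrow> 'b"
    assume h: "c_hilbert_schmidt sc ip T \<and> c_selfadjoint sc ip T \<and>
             c_hilbert_schmidt sc ip S \<and> c_selfadjoint sc ip S \<and>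
             (\<forall>k. ip (T (y k)) (y k) = ip (S (y k)) (y k))"
    define A where "A = (\<lambda>v. T v - S v)"
    have AH: "c_hilbert_schmidt sc ip A" unfolding A_def using diffHS h by blast
    have AS: "c_selfadjoint sc ip A" unfolding A_def using diffSA h by blast
    obtain P Q where PQ: "c_hilbert_schmidt sc ip P \<and> c_positive ip P \<and> c_selfadjoint sc ip P \<and>
       c_hilbert_schmidt sc ip Q \<and> c_positive ip Q \<and> c_selfadjoint sc ip Q \<and> (\<forall>v. P v - Q v = A v)"
      using dec[OF AH AS] by blast
    have "ip (P (y k)) (y k) = ip (Q (y k)) (y k)" for k
    proof -
      have "ip (P (y k)) (y k) - ip (Q (y k)) (y k) = ip (A (y k)) (y k)"
        using PQ ip_diff[OF CH, of "P (y k)" "Q (y k)" "y k"] by simp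
      also have "\<dots> = 0" unfolding A_def using h by (simp add: ip_diff[OF CH])
      finally show ?thesis by simp
    qed
    then have "P = Q" using C1 PQ by blast
    then have "A v = 0" for v using PQ by (metis diff_self)
    then show "T = S" unfolding A_def by (simp add: fun_eq_iff)
  qed
  have c21: ?C1 if C2: ?C2 using C2 by blast
  have c23: ?C3 if C2: ?C2
    unfolding c_injective_family_def
  proof (intro allI impI)
    fix T :: "'b \<Rightarrow> 'b"
    assume h: "c_hilbert_schmidt sc ip T \<and> c_selfadjoint sc ip T \<and> (\<forall>k. ip (T (y k)) (y k) = 0)"
    have "(\<forall>k. ip (T (y k)) (y k) = ip (2 *\<^sub>R T (y k)) (y k))" using h by (simp add: ip_scaleR[OF CH])
    then have "T = (\<lambda>v. 2 *\<^sub>R T v)" using C2 h twoHS twoSA by blast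
    then have "T v = 0" for v by (metis (no_types) scaleR_2 add_cancel_right_right)
    then show "T = (\<lambda>_. 0)" by (simp add: fun_eq_iff)
  qed
  have c32: ?C2 if C3: ?C3
  proof (intro allI impI)
    fix T S :: "'b \<Rightarrow> 'b"
    assume h: "c_hilbert_schmidt sc ip T \<and> c_selfadjoint sc ip T \<and>
             c_hilbert_schmidt sc ip S \<and> c_selfadjoint sc ip S \<and>
             (\<forall>k. ip (T (y k)) (y k) = ip (S (y k)) (y k))"
    have AH: "c_hilbert_schmidt sc ip (\<lambda>v. T v - S v)" using diffHS h by blast
    have AS: "c_selfadjoint sc ip (\<lambda>v. T v - S v)" using diffSA h by blast
    have "\<forall>k. ip (T (y k) - S (y k)) (y k) = 0" using h by (simp add: ip_diff[OF CH])
    then have "(\<lambda>v. T v - S v) = (\<lambda>_. 0)" using C3 AH AS unfolding c_injective_family_def by blast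
    then show "T = S" by (simp add: fun_eq_iff)
  qed
  show ?thesis using c12 c21 c23 c32 by blast
qed

end

theorem mainTheorem9:
  fixes x :: "nat \<Rightarrow> 'a::{real_inner, complete_space}"
    and sc :: "complex \<Rightarrow> 'b::banach \<Rightarrow> 'b"
    and ip :: "'b \<Rightarrow> 'b \<Rightarrow> complex"
    and y :: "nat \<Rightarrow> 'b"
  shows
   "(((\<forall>T S. r_hilbert_schmidt T \<and> r_positive T \<and> r_selfadjoint T \<and>
             r_hilbert_schmidt S \<and> r_positive S \<and> r_selfadjoint S \<and>
             (\<forall>k. T (x k) \<bullet> x k = S (x k) \<bullet> x k) \<longrightarrow> T = S)
      \<longleftrightarrow>
      (\<forall>T S. r_hilbert_schmidt T \<and> r_selfadjoint T \<and>
             r_hilbert_schmidt S \<and> r_selfadjoint S \<and>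
             (\<forall>k. T (x k) \<bullet> x k = S (x k) \<bullet> x k) \<longrightarrow> T = S))
     \<and>
     ((\<forall>T S. r_hilbert_schmidt T \<and> r_selfadjoint T \<and>
             r_hilbert_schmidt S \<and> r_selfadjoint S \<and>
             (\<forall>k. T (x k) \<bullet> x k = S (x k) \<bullet> x k) \<longrightarrow> T = S)
      \<longleftrightarrow> r_injective_family x))
    \<and>
    (complex_hilbert sc ip \<longrightarrow>
     (((\<forall>T S. c_hilbert_schmidt sc ip T \<and> c_positive ip T \<and> c_selfadjoint sc ip T \<and>
             c_hilbert_schmidt sc ip S \<and> c_positive ip S \<and> c_selfadjoint sc ip S \<and>
             (\<forall>k. ip (T (y k)) (y k) = ip (S (y k)) (y k)) \<longrightarrow> T = S)
      \<longleftrightarrow>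
      (\<forall>T S. c_hilbert_schmidt sc ip T \<and> c_selfadjoint sc ip T \<and>
             c_hilbert_schmidt sc ip S \<and> c_selfadjoint sc ip S \<and>
             (\<forall>k. ip (T (y k)) (y k) = ip (S (y k)) (y k)) \<longrightarrow> T = S))
     \<and>
     ((\<forall>T S. c_hilbert_schmidt sc ip T \<and> c_selfadjoint sc ip T \<and>
             c_hilbert_schmidt sc ip S \<and> c_selfadjoint sc ip S \<and>
             (\<forall>k. ip (T (y k)) (y k) = ip (S (y k)) (y k)) \<longrightarrow> T = S)
      \<longleftrightarrow> c_injective_family sc ip y)))"
  apply (rule conjI)
   apply (rule real_case)
  apply (rule impI)
  apply (erule complex_case)
  done

end
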